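(* Let $k$ be an algebraically closed field of characteristic zero and let $\mathcal{X}_g: Y^2=F(X,Z)$ be a hyperelliptic curve of genus $g$ over $k$, with $F$ a binary form of degree $d=2g+2$, such that $\overline{\mathrm{Aut}}(\mathcal{X}_g)\cong A_5$. Then $I_4=I_4'=I_6=I_6'=I_{12}=0$.
   Context: For a hyperelliptic curve $\mathcal{X}_g$ with hyperelliptic involution $z_0$, $\overline{\mathrm{Aut}}(\mathcal{X}_g):=\mathrm{Aut}(\mathcal{X}_g)/\langle z_0\rangle$ (when this is $A_5$ one has $d\ge 12$, so all invariants below are defined). The curve $Y^2=F(X)$ is identified with the binary form $F(X,Z)=\sum_{i=0}^d a_iX^iZ^{d-i}$ of degree $d=2g+2$ (the homogenization to degree $2g+2$). For binary forms $f$ of degree $n$ and $h$ of degree $m$ and an integer $0\le r\le\min(m,n)$, the $r$-th transvectant is $$(f,h)^r:=\frac{(m-r)!\,(n-r)!}{n!\,m!}\sum_{j=0}^r(-1)^j\binom{r}{j}\frac{\partial^r f}{\partial X^{r-j}\partial Z^{j}}\cdot\frac{\partial^r h}{\partial X^{j}\partial Z^{r-j}},$$ a binary form of degree $m+n-2r$. Define $J_{4j}:=(F,F)^{d-2j}$ for $j=1,\dots,g$, and $I_4:=(J_4,J_4)^4$, $I_4':=(J_8,J_8)^8$, $I_6:=((F,J_4)^4,(F,J_4)^4)^{d-4}$, $I_6':=((F,J_8)^8,(F,J_8)^8)^{d-8}$, $M:=((F,J_4)^4,(F,J_8)^8)^{d-10}$ (a form of degree 8), and $I_{12}:=(M,M)^8$.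 *)

theory Defs
  imports "HOL-Computational_Algebra.Polynomial" "HOL-Algebra.Sym_Groups"
begin

text \<open>Binary forms in X, Z are represented as elements of 'a poly poly:
  the outer variable is X, the inner variable (in the coefficients) is Z.\<close>

definition homog :: "nat \<Rightarrow> 'a::field poly \<Rightarrow> 'a poly poly" where
  "homog d f = (\<Sum>i\<le>d. monom (monom (coeff f i) (d - i)) i)"

definition dX :: "nat \<Rightarrow> 'a::field poly poly \<Rightarrow> 'a poly poly" where
  "dX k = pderiv ^^ k"

definition dZ :: "nat \<Rightarrow> 'a::field poly poly \<Rightarrow> 'a poly poly" where
  "dZ k = map_poly pderiv ^^ k"

definition transvectant ::
  "nat \<Rightarrow> nat \<Rightarrow> nat \<Rightarrow> 'a::field poly poly \<Rightarrow> 'a poly poly \<Rightarrow> 'a poly poly" where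
  "transvectant n m r f h =
     smult [: of_nat (fact (m - r) * fact (n - r)) / of_nat (fact n * fact m) :]
       (\<Sum>j\<le>r. of_int ((-1) ^ j * int (r choose j)) *
                 dX (r - j) (dZ j f) * dX j (dZ (r - j) h))"

definition linf :: "'a::field \<Rightarrow> 'a \<Rightarrow> 'a poly poly" where
  "linf a b = [: [:0, b:], [:a:] :]"

text \<open>F^M(X,Z) = F(aX+bZ, cX+eZ) for M = (a,b,c,e), F = homogenisation of f to degree d.\<close>
definition form_subst :: "nat \<Rightarrow> 'a::field poly \<Rightarrow> 'a \<times> 'a \<times> 'a \<times> 'a \<Rightarrow> 'a poly poly" where
  "form_subst d f M = (case M of (a, b, c, e) \<Rightarrow>
     (\<Sum>i\<le>d. smult [:coeff f i:] (linf a b ^ i * linf c e ^ (d - i))))"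

definition mat_mult :: "'a::field \<times> 'a \<times> 'a \<times> 'a \<Rightarrow> 'a \<times> 'a \<times> 'a \<times> 'a \<Rightarrow> 'a \<times> 'a \<times> 'a \<times> 'a" where
  "mat_mult M N = (case M of (a, b, c, e) \<Rightarrow> case N of (a', b', c', e') \<Rightarrow>
     (a * a' + b * c', a * b' + b * e', c * a' + e * c', c * b' + e * e'))"

definition mat_det :: "'a::field \<times> 'a \<times> 'a \<times> 'a \<Rightarrow> 'a" where
  "mat_det M = (case M of (a, b, c, e) \<Rightarrow> a * e - b * c)"

definition proj_class :: "'a::field \<times> 'a \<times> 'a \<times> 'a \<Rightarrow> ('a \<times> 'a \<times> 'a \<times> 'a) set" where
  "proj_class M = {N. \<exists>t. t \<noteq> 0 \<and> N = (case M of (a, b, c, e) \<Rightarrow> (t * a, t * b, t * c, t * e))}"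

definition form_stab :: "nat \<Rightarrow> 'a::field poly \<Rightarrow> ('a \<times> 'a \<times> 'a \<times> 'a) set" where
  "form_stab d f = {M. mat_det M \<noteq> 0 \<and>
      (\<exists>lam. lam \<noteq> 0 \<and> form_subst d f M = smult [:lam:] (homog d f))}"

text \<open>Reduced automorphism group Aut(X)/<z0>, realised as the subgroup of PGL_2(k)
  preserving the binary form F up to scalars.\<close>
definition red_aut_group :: "nat \<Rightarrow> 'a::field poly \<Rightarrow> ('a \<times> 'a \<times> 'a \<times> 'a) set monoid" where
  "red_aut_group d f =
     \<lparr> carrier = proj_class ` form_stab d f,
       mult = (\<lambda>A B. proj_class (mat_mult (SOME M. M \<in> A) (SOME N. N \<in> B))),
       one = proj_class (1, 0, 0, 1) \<rparr>"

text \<open>Hyperelliptic curve Y^2 = F(X,Z) of genus g: F of degree 2g+2 without repeated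
  linear factors; dehomogenised f has degree 2g+1 or 2g+2 and distinct roots.\<close>
definition hyperelliptic :: "nat \<Rightarrow> 'a::field poly \<Rightarrow> bool" where
  "hyperelliptic g f \<longleftrightarrow> g \<ge> 2 \<and> (degree f = 2 * g + 2 \<or> degree f = 2 * g + 1) \<and> rsquarefree f"

definition J4 :: "nat \<Rightarrow> 'a::field poly \<Rightarrow> 'a poly poly" where
  "J4 d f = transvectant d d (d - 2) (homog d f) (homog d f)"
definition J8 :: "nat \<Rightarrow> 'a::field poly \<Rightarrow> 'a poly poly" where
  "J8 d f = transvectant d d (d - 4) (homog d f) (homog d f)"

definition I4 :: "nat \<Rightarrow> 'a::field poly \<Rightarrow> 'a poly poly" where
  "I4 d f = transvectant 4 4 4 (J4 d f) (J4 d f)"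
definition I4' :: "nat \<Rightarrow> 'a::field poly \<Rightarrow> 'a poly poly" where
  "I4' d f = transvectant 8 8 8 (J8 d f) (J8 d f)"

definition FJ4 :: "nat \<Rightarrow> 'a::field poly \<Rightarrow> 'a poly poly" where
  "FJ4 d f = transvectant d 4 4 (homog d f) (J4 d f)"
definition FJ8 :: "nat \<Rightarrow> 'a::field poly \<Rightarrow> 'a poly poly" where
  "FJ8 d f = transvectant d 8 8 (homog d f) (J8 d f)"

definition I6 :: "nat \<Rightarrow> 'a::field poly \<Rightarrow> 'a poly poly" where
  "I6 d f = transvectant (d - 4) (d - 4) (d - 4) (FJ4 d f) (FJ4 d f)"
definition I6' :: "nat \<Rightarrow> 'a::field poly \<Rightarrow> 'a poly poly" where
  "I6' d f = transvectant (d - 8) (d - 8) (d - 8) (FJ8 d f) (FJ8 d f)"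

definition Mform :: "nat \<Rightarrow> 'a::field poly \<Rightarrow> 'a poly poly" where
  "Mform d f = transvectant (d - 4) (d - 8) (d - 10) (FJ4 d f) (FJ8 d f)"
definition I12 :: "nat \<Rightarrow> 'a::field poly \<Rightarrow> 'a poly poly" where
  "I12 d f = transvectant 8 8 8 (Mform d f) (Mform d f)"

end

theory Submission
  imports Defs "HOL-Algebra.Group_Action"
begin

lemma funpow_comm_comp:
  assumes "f \<circ> g = g \<circ> f"
  shows "(f \<circ> g) ^^ n = f ^^ n \<circ> g ^^ n"
proof -
  have c: "g \<circ> f ^^ n = f ^^ n \<circ> g" for n
    by (induction n) (simp_all add: fun_eq_iff, metis assms comp_apply)
  show ?thesis
    by (induction n) (simp_all add: fun_eq_iff, metis c comp_apply)
qed

lemma cycle_pow_id: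
  assumes "cycle cs" "length cs dvd n"
  shows "(cycle_of_list cs) ^^ n = id"
proof
  fix x
  show "((cycle_of_list cs) ^^ n) x = id x"
  proof (cases "x \<in> set cs")
    case True
    have "map (cycle_of_list cs ^^ n) cs = rotate n cs"
      using cyclic_rotation[OF assms(1)] by blast
    also have "\<dots> = cs" using assms(2) by (simp add: rotate_id dvd_eq_mod_eq_0)
    finally have "map (cycle_of_list cs ^^ n) cs = cs" .
    then show ?thesis using True by (metis id_apply in_set_conv_nth nth_map length_map)
  next
    case False
    have "(cycle_of_list cs ^^ n) permutes set cs"
      by (simp add: cycle_permutes permutes_funpow)
    then show ?thesis using False by (simp add: permutes_not_in)
  qed
qed

lemma cycle_short_id:
  assumes "length cs \<le> 1" shows "cycle_of_list cs = id"
  using assms by (cases cs rule: cycle_of_list.cases) auto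

lemma decomp_props:
  assumes "cycle_decomp S p"
  shows "\<exists>ls. p permutes S \<and> finite S \<and> sum_list ls = card S \<and>
     (\<forall>k. (\<forall>L\<in>set ls. L \<ge> 2 \<longrightarrow> L dvd k) \<longrightarrow> p ^^ k = id) \<and>
     (evenperm p \<longleftrightarrow> even (sum_list (map (\<lambda>L. L - 1) ls)))"
  using assms
proof induction
  case empty
  have "id ^^ k = (id::'a\<Rightarrow>'a)" for k by (induction k) auto
  then show ?case by (intro exI[of _ "[]"]) (simp add: permutes_id evenperm_id id_def)
next
  case (comp I p cs)
  then obtain ls where ls: "p permutes I" "finite I" "sum_list ls = card I"
     "\<forall>k. (\<forall>L\<in>set ls. L \<ge> 2 \<longrightarrow> L dvd k) \<longrightarrow> p ^^ k = id"
     "evenperm p \<longleftrightarrow> even (sum_list (map (\<lambda>L. L - 1) ls))" by blast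
  let ?c = "cycle_of_list cs"
  have cp: "?c permutes set cs" by (rule cycle_permutes)
  have perm1: "?c permutes (set cs \<union> I)" using cp by (rule permutes_subset) auto
  have perm2: "p permutes (set cs \<union> I)" using ls(1) by (rule permutes_subset) auto
  have comm: "?c \<circ> p = p \<circ> ?c"
  proof
    fix x
    show "(?c \<circ> p) x = (p \<circ> ?c) x"
    proof (cases "x \<in> set cs")
      case True
      then have "p x = x" using comp.hyps(3) ls(1) by (meson disjoint_iff permutes_not_in)
      moreover have "?c x \<in> set cs" using cp True by (simp add: permutes_in_image)
      then have "p (?c x) = ?c x" using comp.hyps(3) ls(1) by (meson disjoint_iff permutes_not_in)
      ultimately show ?thesis by simp
    next
      case False
      then have cx: "?c x = x" using cp by (simp add: permutes_not_in)
      show ?thesis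
      proof (cases "x \<in> I")
        case True
        then have "p x \<in> I" using ls(1) by (simp add: permutes_in_image)
        then have "p x \<notin> set cs" using comp.hyps(3) by blast
        then have "?c (p x) = p x" using cp by (simp add: permutes_not_in)
        then show ?thesis using cx by simp
      next
        case False
        then have "p x = x" using ls(1) by (simp add: permutes_not_in)
        then show ?thesis using cx by simp
      qed
    qed
  qed
  have fin: "finite (set cs \<union> I)" using ls(2) by simp
  have card: "card (set cs \<union> I) = length cs + card I"
    using comp.hyps(2,3) ls(2) by (simp add: card_Un_disjoint distinct_card)
  have ev: "evenperm ?c \<longleftrightarrow> even (length cs - 1)"
    using swapidseq_ext_imp_swapidseq[OF swapidseq_ext_of_cycles[OF comp.hyps(2)]]
    by (simp add: evenperm_unique)
  have pp: "permutation p" using ls(1,2) permutation_permutes by blast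
  have pc: "permutation ?c" by (rule permutation_of_cycle)
  show ?case
  proof (rule exI[of _ "length cs # ls"], intro conjI allI impI)
    show "?c \<circ> p permutes set cs \<union> I" using permutes_compose[OF perm2 perm1] .
    show "finite (set cs \<union> I)" by fact
    show "sum_list (length cs # ls) = card (set cs \<union> I)" using card ls(3) by simp
  next
    fix k assume h: "\<forall>L\<in>set (length cs # ls). 2 \<le> L \<longrightarrow> L dvd k"
    have "?c ^^ k = id"
    proof (cases "length cs \<le> 1")
      case True then show ?thesis by (simp add: cycle_short_id)
    next
      case False then show ?thesis using h comp.hyps(2) by (intro cycle_pow_id) auto
    qed
    moreover have "p ^^ k = id" using h ls(4) by auto
    ultimately show "(?c \<circ> p) ^^ k = id" by (simp add: funpow_comm_comp[OF comm])
  next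
    show "evenperm (?c \<circ> p) = even (sum_list (map (\<lambda>L. L - 1) (length cs # ls)))"
      using evenperm_comp[OF pc pp] ev ls(5) by auto
  qed
qed

lemma list_arith:
  fixes xs :: "nat list"
  assumes "\<forall>x\<in>set xs. x \<ge> 2" "sum_list xs \<le> 5" "even (sum_list (map (\<lambda>L. L - 1) xs))"
  shows "(\<forall>x\<in>set xs. x dvd 2) \<or> (\<forall>x\<in>set xs. x dvd 3) \<or> (\<forall>x\<in>set xs. x dvd 5)"
proof (cases xs)
  case Nil then show ?thesis by simp
next
  case (Cons a ys)
  show ?thesis
  proof (cases ys)
    case Nil
    then have "a = 2 \<or> a = 3 \<or> a = 4 \<or> a = 5" using assms Cons by auto
    then show ?thesis using assms Cons Nil by auto
  next
    case (Cons b zs)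
    show ?thesis
    proof (cases zs)
      case Nil
      then have "(a = 2 \<and> b = 2) \<or> (a = 2 \<and> b = 3) \<or> (a = 3 \<and> b = 2)"
        using assms Cons \<open>xs = a # ys\<close> by auto
      then show ?thesis using assms Cons \<open>xs = a # ys\<close> Nil by auto
    next
      case (Cons c ws)
      then show ?thesis using assms \<open>xs = a # ys\<close> \<open>ys = b # zs\<close>
        by (auto simp: sum_list_nonneg) 
    qed
  qed
qed

lemma a5_orders:
  assumes "p permutes {1..5::nat}" "evenperm p"
  shows "p ^^ 2 = id \<or> p ^^ 3 = id \<or> p ^^ 5 = id"
proof -
  have "cycle_decomp {1..5} p" using cycle_decomposition[OF assms(1)] by simp
  from decomp_props[OF this] obtain ls where ls: "sum_list ls = 5"
     "\<forall>k. (\<forall>L\<in>set ls. L \<ge> 2 \<longrightarrow> L dvd k) \<longrightarrow> p ^^ k = id"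
     "evenperm p \<longleftrightarrow> even (sum_list (map (\<lambda>L. L - 1) ls))" by auto
  let ?xs = "filter (\<lambda>L. L \<ge> 2) ls"
  have s1: "sum_list ?xs \<le> sum_list ls"
    by (induction ls) auto
  have s2: "sum_list (map (\<lambda>L. L - 1) ?xs) = sum_list (map (\<lambda>L. L - 1) ls)"
    by (induction ls) auto
  have "(\<forall>x\<in>set ?xs. x dvd 2) \<or> (\<forall>x\<in>set ?xs. x dvd 3) \<or> (\<forall>x\<in>set ?xs. x dvd 5)"
    using list_arith[of ?xs] s1 s2 ls assms(2) by auto
  then show ?thesis using ls(2) by auto
qed

abbreviation D2 :: "'a::field poly poly \<Rightarrow> 'a poly poly" where "D2 \<equiv> map_poly pderiv"

lemma D2_coeff: "coeff (D2 P) i = pderiv (coeff P i)"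
  by (simp add: coeff_map_poly)

lemma D2_add: "D2 (P + Q) = D2 P + D2 Q"
  by (rule poly_eqI) (simp add: D2_coeff pderiv_add)

lemma D2_zero[simp]: "D2 0 = 0" by simp

lemma D2_smult: "D2 (smult [:a:] P) = smult [:a:] (D2 P)"
  by (rule poly_eqI) (simp add: D2_coeff pderiv_smult)

lemma pderiv_sum': "pderiv (sum f A) = (\<Sum>x\<in>A. pderiv (f x))"
  using higher_pderiv_sum[of 1 f A] by simp

lemma D2_mult: "D2 (P * Q) = D2 P * Q + P * D2 Q"
proof (rule poly_eqI)
  fix n
  show "coeff (D2 (P * Q)) n = coeff (D2 P * Q + P * D2 Q) n"
  proof -
    have "coeff (D2 (P*Q)) n = (\<Sum>i\<le>n. pderiv (coeff P i) * coeff Q (n-i)) + (\<Sum>i\<le>n. coeff P i * pderiv (coeff Q (n-i)))"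
      by (simp add: D2_coeff coeff_mult pderiv_sum' pderiv_mult sum.distrib[symmetric] algebra_simps)
    then show ?thesis by (simp add: coeff_mult D2_coeff)
  qed
qed

lemma D2_const: "D2 [:c:] = [:pderiv c:]"
  by (rule poly_eqI) (simp add: D2_coeff coeff_pCons split: nat.splits)

definition lin :: "('a::field poly poly \<Rightarrow> 'a poly poly) \<Rightarrow> bool" where
  "lin L \<longleftrightarrow> (\<forall>P Q. L (P + Q) = L P + L Q) \<and> (\<forall>a P. L (smult [:a:] P) = smult [:a:] (L P))"

lemma lin_add: "lin L \<Longrightarrow> L (P + Q) = L P + L Q" by (simp add: lin_def)
lemma lin_smult: "lin L \<Longrightarrow> L (smult [:a:] P) = smult [:a:] (L P)" by (simp add: lin_def)
lemma lin_zero: "lin L \<Longrightarrow> L 0 = 0"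
  using lin_smult[of L 0 0] by simp
lemma lin_sum: "lin L \<Longrightarrow> L (sum f A) = (\<Sum>x\<in>A. L (f x))"
  by (induction A rule: infinite_finite_induct) (simp_all add: lin_zero lin_add)
lemma lin_comp: "lin L \<Longrightarrow> lin K \<Longrightarrow> lin (L \<circ> K)"
  by (simp add: lin_def)
lemma lin_funpow: "lin L \<Longrightarrow> lin (L ^^ k)"
  by (induction k) (simp_all add: lin_def)
lemma lin_pderiv: "lin pderiv"
  by (simp add: lin_def pderiv_add pderiv_smult)
lemma lin_D2: "lin D2"
  by (simp add: lin_def D2_add D2_smult)
lemma lin_dX: "lin (dX k)" unfolding dX_def by (intro lin_funpow lin_pderiv)
lemma lin_dZ: "lin (dZ k)" unfolding dZ_def by (intro lin_funpow lin_D2)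

lemma smult_sum2: "smult c (sum f A) = (\<Sum>x\<in>A. smult c (f x))"
  by (induction A rule: infinite_finite_induct) (simp_all add: smult_add_right)

lemma of_int_mult_pp: "(of_int z :: 'a::field poly poly) * P = smult [:of_int z:] P"
  by (metis mult.commute mult.right_neutral mult_smult_right of_int_poly smult_one)

lemma T_add1: "transvectant n m r (P1+P2) Q = transvectant n m r P1 Q + transvectant n m r P2 Q"
  unfolding transvectant_def
  by (simp add: lin_add[OF lin_dX] lin_add[OF lin_dZ] distrib_left distrib_right sum.distrib smult_add_right)
lemma T_add2: "transvectant n m r P (Q1+Q2) = transvectant n m r P Q1 + transvectant n m r P Q2"
  unfolding transvectant_def
  by (simp add: lin_add[OF lin_dX] lin_add[OF lin_dZ] distrib_left distrib_right sum.distrib smult_add_right)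
lemma T_smult1: "transvectant n m r (smult [:a:] P) Q = smult [:a:] (transvectant n m r P Q)"
  unfolding transvectant_def
  by (simp add: lin_smult[OF lin_dX] lin_smult[OF lin_dZ] smult_sum2 smult_smult mult.commute[of "[:a:]"] mult.commute[of a] mult.assoc)
lemma T_smult2: "transvectant n m r P (smult [:a:] Q) = smult [:a:] (transvectant n m r P Q)"
  unfolding transvectant_def
  by (simp add: lin_smult[OF lin_dX] lin_smult[OF lin_dZ] smult_sum2 smult_smult mult.commute[of "[:a:]"] mult.commute[of a] mult.assoc)
lemma lin_T1: "lin (\<lambda>P. transvectant n m r P Q)"
  by (simp add: lin_def T_add1 T_smult1)
lemma lin_T2: "lin (\<lambda>Q. transvectant n m r P Q)"
  by (simp add: lin_def T_add2 T_smult2)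

lemma T_zero1: "transvectant n m r 0 Q = 0" using lin_zero[OF lin_T1] .
lemma T_zero2: "transvectant n m r P 0 = 0" using lin_zero[OF lin_T2] .

section \<open>Linear forms\<close>

definition ff :: "nat \<Rightarrow> nat \<Rightarrow> nat" where "ff n q = (\<Prod>i<q. n - i)"

lemma ff_0[simp]: "ff n 0 = 1" by (simp add: ff_def)

lemma smult_one_pp[simp]: "smult [:1:] (P :: 'a::field poly poly) = P"
  by (subst one_pCons[symmetric]) simp

lemma D2_one[simp]: "D2 1 = 0"
  by (simp add: map_poly_1)

lemma smult_const_is_mult: "smult [:c:] P = [:[:c:]:] * P"
  by simp

lemma ff_Suc: "ff n (Suc q) = ff n q * (n - q)"
  by (simp add: ff_def)

lemma ff_add: "ff n (a + b) = ff n a * ff (n - a) b"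
  by (induction b) (simp_all add: ff_Suc diff_diff_add)

lemma ff_fact: "q \<le> n \<Longrightarrow> ff n q * fact (n - q) = fact n"
proof (induction q)
  case 0 then show ?case by (simp add: ff_def)
next
  case (Suc q)
  then have e: "n - q = Suc (n - Suc q)" by simp
  have "fact (n - q) = (n - q) * fact (n - Suc q)"
    by (subst e, subst fact_Suc) (simp add: e[symmetric])
  then show ?case using Suc by (simp add: ff_Suc)
qed

lemma ff_pos: "r \<le> n \<Longrightarrow> ff n r > 0"
  by (metis ff_fact fact_nonzero mult_is_0 neq0_conv)

lemma const2_mult: "[:[:k:]:] * Q = smult [:k:] Q"
  by simp

lemma D2_power: "D2 (P ^ Suc n) = of_nat (Suc n) * (P ^ n * D2 P)"
proof (induction n)
  case 0 then show ?case by simp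
next
  case (Suc n)
  have "D2 (P ^ Suc (Suc n)) = D2 P * P ^ Suc n + P * D2 (P ^ Suc n)"
    by (subst power_Suc, subst D2_mult) (simp add: mult.commute)
  also have "\<dots> = of_nat (Suc (Suc n)) * (P ^ Suc n * D2 P)"
    using Suc by (simp add: algebra_simps del: of_nat_Suc) (simp add: algebra_simps)
  finally show ?case .
qed

lemma pderiv_linf: "pderiv (linf a b) = [:[:a:]:]"
  by (simp add: linf_def pderiv_pCons)
lemma D2_linf: "D2 (linf a b) = [:[:b:]:]"
  by (simp add: linf_def map_poly_pCons pderiv_pCons)

lemma dZ_linf_pow:
  "dZ q (linf a b ^ n) = smult [:of_nat (ff n q) * b ^ q:] (linf a b ^ (n - q))"
proof (induction q)
  case 0 then show ?case by (simp add: dZ_def ff_def)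
next
  case (Suc q)
  have "dZ (Suc q) (linf a b ^ n) = D2 (dZ q (linf a b ^ n))" by (simp add: dZ_def)
  also have "\<dots> = smult [:of_nat (ff n q) * b ^ q:] (D2 (linf a b ^ (n - q)))"
    using Suc by (simp add: D2_smult)
  also have "\<dots> = smult [:of_nat (ff n (Suc q)) * b ^ Suc q:] (linf a b ^ (n - Suc q))"
  proof (cases "n - q")
    case 0
    then show ?thesis by (simp add: ff_Suc)
  next
    case (Suc k)
    then have "n - Suc q = k" by simp
    then show ?thesis using Suc
      by (simp del: power_Suc add: D2_power D2_linf ff_Suc smult_smult of_nat_poly algebra_simps) (simp add: algebra_simps)
  qed
  finally show ?case .
qed

lemma dX_linf_pow:
  "dX p (smult [:c:] (linf a b ^ n)) = smult [:c * of_nat (ff n p) * a ^ p:] (linf a b ^ (n - p))"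
proof (induction p)
  case 0 then show ?case by (simp add: dX_def ff_def)
next
  case (Suc p)
  have "dX (Suc p) (smult [:c:] (linf a b ^ n)) = pderiv (dX p (smult [:c:] (linf a b ^ n)))"
    by (simp add: dX_def)
  also have "\<dots> = smult [:c * of_nat (ff n p) * a ^ p:] (pderiv (linf a b ^ (n - p)))"
    using Suc by (simp add: pderiv_smult)
  also have "\<dots> = smult [:c * of_nat (ff n (Suc p)) * a ^ Suc p:] (linf a b ^ (n - Suc p))"
  proof (cases "n - p")
    case 0
    then show ?thesis by (simp add: ff_Suc)
  next
    case (Suc k)
    then have "n - Suc p = k" by simp
    then show ?thesis using Suc
      by (simp del: power_Suc add: pderiv_power_Suc pderiv_linf ff_Suc smult_smult algebra_simps of_nat_poly) (simp add: algebra_simps)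
  qed
  finally show ?case .
qed

lemma dXdZ_linf_pow:
  assumes "p + q \<le> n"
  shows "dX p (dZ q (linf a b ^ n)) = smult [:of_nat (ff n (q + p)) * b ^ q * a ^ p:] (linf a b ^ (n - (q + p)))"
  by (simp add: dZ_linf_pow dX_linf_pow ff_add diff_diff_add mult_ac)

lemma binom_det:
  fixes a1 b1 a2 b2 :: "'a::field"
  shows "(\<Sum>j\<le>r. of_int ((-1) ^ j * int (r choose j)) * (b1 ^ j * a1 ^ (r - j)) * (b2 ^ (r - j) * a2 ^ j))
     = (a1 * b2 - b1 * a2) ^ r"
proof -
  have "(a1 * b2 - b1 * a2) ^ r = (-(b1 * a2) + a1 * b2) ^ r" by (simp add: algebra_simps)
  also have "\<dots> = (\<Sum>k\<le>r. of_nat (r choose k) * (-(b1 * a2)) ^ k * (a1 * b2) ^ (r - k))"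
    by (rule binomial_ring)
  also have "\<dots> = (\<Sum>j\<le>r. of_int ((-1) ^ j * int (r choose j)) * (b1 ^ j * a1 ^ (r - j)) * (b2 ^ (r - j) * a2 ^ j))"
  proof (rule sum.cong[OF refl])
    fix k assume "k \<in> {..r}"
    have aux: "of_nat c * (s * (x1 * x2)) * (y1 * y2) = (s * of_nat c) * (x1 * y1) * (y2 * x2)"
      for c :: nat and s x1 x2 y1 y2 :: 'a
      by (simp only: mult_ac)
    have "(-(b1 * a2)) ^ k = (-1)^k * (b1 ^ k * a2 ^ k)"
      by (subst power_minus) (simp only: power_mult_distrib)
    moreover have "(a1 * b2) ^ (r - k) = a1 ^ (r - k) * b2 ^ (r - k)"
      by (simp add: power_mult_distrib)
    moreover have "of_int ((-1) ^ k * int (r choose k)) = ((-1)^k * of_nat (r choose k) :: 'a)"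
      by simp
    ultimately show "of_nat (r choose k) * (-(b1 * a2)) ^ k * (a1 * b2) ^ (r - k) =
      of_int ((-1) ^ k * int (r choose k)) * (b1 ^ k * a1 ^ (r - k)) * (b2 ^ (r - k) * a2 ^ k)"
      by (simp only: aux)
  qed
  finally show ?thesis by simp
qed

lemma const_sum: "(\<Sum>j\<in>A. [:f j:]) = [:\<Sum>j\<in>A. f j:]"
  by (induction A rule: infinite_finite_induct) simp_all

lemma const_mult: "[:a:] * [:b:] = [:a * b:]"
  by (simp add: mult.commute)

lemma smult_prod3: "smult [:z:] (smult [:A:] U) * smult [:B:] V = smult [:z * A * B:] (U * V)"
  by (simp add: mult_smult_left mult_smult_right smult_smult mult.assoc) (simp only: mult_ac)

lemma T_lin:
  fixes a1 b1 a2 b2 :: "'a::field_char_0"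
  assumes "r \<le> n" "r \<le> m"
  shows "transvectant n m r (linf a1 b1 ^ n) (linf a2 b2 ^ m)
       = smult [:(a1 * b2 - b1 * a2) ^ r:] (linf a1 b1 ^ (n - r) * linf a2 b2 ^ (m - r))"
proof -
  let ?W = "linf a1 b1 ^ (n - r) * linf a2 b2 ^ (m - r)"
  let ?c = "\<lambda>j. of_int ((-1) ^ j * int (r choose j)) * (of_nat (ff n r) * b1 ^ j * a1 ^ (r - j))
              * (of_nat (ff m r) * b2 ^ (r - j) * a2 ^ j)"
  have trm: "of_int ((-1) ^ j * int (r choose j)) * dX (r - j) (dZ j (linf a1 b1 ^ n))
        * dX j (dZ (r - j) (linf a2 b2 ^ m)) = smult [:?c j:] ?W" if j: "j \<le> r" for j
  proof -
    have e1: "dX (r - j) (dZ j (linf a1 b1 ^ n)) = smult [:of_nat (ff n r) * b1 ^ j * a1 ^ (r - j):] (linf a1 b1 ^ (n - r))"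
      using dXdZ_linf_pow[of "r - j" j n a1 b1] j assms by simp
    have e2: "dX j (dZ (r - j) (linf a2 b2 ^ m)) = smult [:of_nat (ff m r) * b2 ^ (r - j) * a2 ^ j:] (linf a2 b2 ^ (m - r))"
      using dXdZ_linf_pow[of j "r - j" m a2 b2] j assms by simp
    show ?thesis unfolding e1 e2 of_int_mult_pp smult_prod3 ..
  qed
  have sum: "(\<Sum>j\<le>r. ?c j) = of_nat (ff n r) * of_nat (ff m r) * (a1 * b2 - b1 * a2) ^ r"
  proof -
    have aux2: "z * (p * x1 * x2) * (q * y1 * y2) = p * q * (z * (x1 * x2) * (y1 * y2))" for z p q x1 x2 y1 y2 :: 'a
      by (simp add: mult_ac)
    show ?thesis unfolding binom_det[symmetric] sum_distrib_left
      by (rule sum.cong[OF refl]) (rule aux2)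
  qed
  have fn: "of_nat (fact n) = (of_nat (ff n r) * of_nat (fact (n - r)) :: 'a)"
    using arg_cong[OF ff_fact[OF assms(1)], of "of_nat :: nat \<Rightarrow> 'a"] by (simp only: of_nat_mult)
  have fm: "of_nat (fact m) = (of_nat (ff m r) * of_nat (fact (m - r)) :: 'a)"
    using arg_cong[OF ff_fact[OF assms(2)], of "of_nat :: nat \<Rightarrow> 'a"] by (simp only: of_nat_mult)
  have K: "(of_nat (fact (m - r) * fact (n - r)) / of_nat (fact n * fact m) :: 'a)
           * (of_nat (ff n r) * of_nat (ff m r)) = 1"
  proof -
    have nz: "(of_nat (fact (n - r)) :: 'a) \<noteq> 0" "(of_nat (fact (m - r)) :: 'a) \<noteq> 0"
      "(of_nat (ff n r) :: 'a) \<noteq> 0" "(of_nat (ff m r) :: 'a) \<noteq> 0"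
      using ff_pos[OF assms(1)] ff_pos[OF assms(2)] by auto
    have gen: "A \<noteq> 0 \<Longrightarrow> B \<noteq> 0 \<Longrightarrow> p \<noteq> 0 \<Longrightarrow> q \<noteq> 0 \<Longrightarrow> (B * A) / ((p * A) * (q * B)) * (p * q) = 1"
      for A B p q :: 'a by (simp add: field_simps)
    show ?thesis unfolding of_nat_mult fn fm using gen[OF nz] .
  qed
  have "transvectant n m r (linf a1 b1 ^ n) (linf a2 b2 ^ m)
      = smult [:of_nat (fact (m - r) * fact (n - r)) / of_nat (fact n * fact m):] (\<Sum>j\<le>r. smult [:?c j:] ?W)"
  proof -
    have "(\<Sum>j\<le>r. of_int ((-1) ^ j * int (r choose j)) * dX (r - j) (dZ j (linf a1 b1 ^ n))
        * dX j (dZ (r - j) (linf a2 b2 ^ m))) = (\<Sum>j\<le>r. smult [:?c j:] ?W)"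
      by (rule sum.cong[OF refl]) (rule trm, simp)
    then show ?thesis unfolding transvectant_def by (simp only:)
  qed
  also have "\<dots> = smult [:of_nat (fact (m - r) * fact (n - r)) / of_nat (fact n * fact m) * (\<Sum>j\<le>r. ?c j):] ?W"
  proof -
    have "(\<Sum>j\<le>r. smult [:?c j:] ?W) = smult (\<Sum>j\<le>r. [:?c j:]) ?W" by (rule smult_sum[symmetric])
    also have "\<dots> = smult [:\<Sum>j\<le>r. ?c j:] ?W" by (simp only: const_sum)
    finally show ?thesis by (simp only: smult_smult const_mult)
  qed
  also have "\<dots> = smult [:(a1 * b2 - b1 * a2) ^ r:] ?W"
  proof -
    have gen: "x * y = 1 \<Longrightarrow> x * (y * D) = D" for x y D :: 'a
      by (simp add: mult.assoc[symmetric])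
    show ?thesis unfolding sum using gen[OF K] by (simp only: mult.assoc)
  qed
  finally show ?thesis .
qed

section \<open>Substitution\<close>

lemma hom_sum:
  assumes "f 0 = 0" "\<And>x y. f (x + y) = f x + f y"
  shows "f (sum g A) = (\<Sum>x\<in>A. f (g x))"
  by (induction A rule: infinite_finite_induct) (simp_all add: assms)

lemma map_poly_add_hom:
  assumes "f 0 = 0" "\<And>x y. f (x + y) = f x + f y"
  shows "map_poly f (p + q) = map_poly f p + map_poly f q"
  by (rule poly_eqI) (simp add: coeff_map_poly assms)

lemma map_poly_mult_hom:
  fixes f :: "'a::comm_ring_1 \<Rightarrow> 'b::comm_ring_1"
  assumes "f 0 = 0" "\<And>x y. f (x + y) = f x + f y" "\<And>x y. f (x * y) = f x * f y"
  shows "map_poly f (p * q) = map_poly f p * map_poly f q"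
proof (rule poly_eqI)
  fix n
  show "coeff (map_poly f (p * q)) n = coeff (map_poly f p * map_poly f q) n"
    by (simp add: coeff_map_poly assms coeff_mult hom_sum[of f, OF assms(1,2)])
qed

lemma map_poly_const: "f 0 = 0 \<Longrightarrow> map_poly f [:a:] = [:f a:]"
  by (cases "a = 0") (simp_all add: map_poly_pCons)

lemma pCons_split: "pCons u (P :: 'a::comm_ring_1 poly) = [:u:] + [:0, 1:] * P"
  by simp

definition c2 :: "'a::field \<Rightarrow> 'a poly poly" where "c2 a = [:[:a:]:]"
definition phiZ :: "'a::field poly poly \<Rightarrow> 'a poly \<Rightarrow> 'a poly poly" where
  "phiZ L c = poly (map_poly c2 c) L"
definition Sb :: "'a::field poly poly \<Rightarrow> 'a poly poly \<Rightarrow> 'a poly poly \<Rightarrow> 'a poly poly" where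
  "Sb L1 L2 P = poly (map_poly (phiZ L2) P) L1"

lemma c2_0[simp]: "c2 0 = 0" by (simp add: c2_def)
lemma c2_add: "c2 (x + y) = c2 x + c2 y" by (simp add: c2_def)
lemma c2_mult: "c2 (x * y) = c2 x * c2 y" by (simp add: c2_def)

lemma phiZ_0[simp]: "phiZ L 0 = 0" by (simp add: phiZ_def)
lemma phiZ_add: "phiZ L (x + y) = phiZ L x + phiZ L y"
  by (simp add: phiZ_def map_poly_add_hom c2_add)
lemma phiZ_mult: "phiZ L (x * y) = phiZ L x * phiZ L y"
  by (simp add: phiZ_def map_poly_mult_hom c2_add c2_mult)
lemma phiZ_const: "phiZ L [:a:] = [:[:a:]:]"
  by (simp add: phiZ_def c2_def map_poly_const)
lemma phiZ_one[simp]: "phiZ L 1 = 1"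
  using phiZ_const[of L 1] by (simp add: one_pCons)
lemma phiZ_monom: "phiZ L (monom a j) = smult [:a:] (L ^ j)"
  by (simp add: phiZ_def map_poly_monom poly_monom c2_def)

lemma Sb_0[simp]: "Sb L1 L2 0 = 0" by (simp add: Sb_def)
lemma Sb_add: "Sb L1 L2 (P + Q) = Sb L1 L2 P + Sb L1 L2 Q"
  by (simp add: Sb_def map_poly_add_hom phiZ_add)
lemma Sb_mult: "Sb L1 L2 (P * Q) = Sb L1 L2 P * Sb L1 L2 Q"
  by (simp add: Sb_def map_poly_mult_hom phiZ_add phiZ_mult)
lemma Sb_const: "Sb L1 L2 [:u:] = phiZ L2 u"
  by (simp add: Sb_def map_poly_const)
lemma Sb_smult: "Sb L1 L2 (smult [:a:] P) = smult [:a:] (Sb L1 L2 P)"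
proof -
  have "Sb L1 L2 (smult [:a:] P) = Sb L1 L2 ([:[:a:]:] * P)" by simp
  also have "\<dots> = [:[:a:]:] * Sb L1 L2 P" by (simp only: Sb_mult Sb_const phiZ_const)
  finally show ?thesis by simp
qed
lemma Sb_power: "Sb L1 L2 (P ^ n) = (Sb L1 L2 P) ^ n"
proof (induction n)
  case 0
  have "Sb L1 L2 1 = 1" using Sb_const[of L1 L2 1] by (simp add: phiZ_const one_pCons)
  then show ?case by simp
next
  case (Suc n) then show ?case by (simp add: Sb_mult)
qed
lemma lin_Sb: "lin (Sb L1 L2)"
  by (simp add: lin_def Sb_add Sb_smult)
lemma Sb_monom: "Sb L1 L2 (monom (monom a j) i) = smult [:a:] (L1 ^ i * L2 ^ j)"
  by (simp add: Sb_def map_poly_monom poly_monom phiZ_monom mult.commute)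

lemma Sb_linf: "Sb (linf a b) (linf c e) (linf x y) = linf (x * a + y * c) (x * b + y * e)"
  by (simp add: Sb_def linf_def phiZ_def c2_def map_poly_pCons algebra_simps)

definition S :: "'a::field \<times> 'a \<times> 'a \<times> 'a \<Rightarrow> 'a poly poly \<Rightarrow> 'a poly poly" where
  "S M = (case M of (a, b, c, e) \<Rightarrow> Sb (linf a b) (linf c e))"

lemma form_subst_S: "form_subst d f M = S M (homog d f)"
proof -
  obtain a b c e where M: "M = (a, b, c, e)" by (cases M) auto
  show ?thesis unfolding M form_subst_def S_def homog_def
    by (simp add: lin_sum[OF lin_Sb] Sb_monom)
qed

definition ev :: "'a::field poly poly \<Rightarrow> 'a \<Rightarrow> 'a \<Rightarrow> 'a" where
  "ev P x z = poly (poly P [:x:]) z"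

lemma ev_add: "ev (P + Q) x z = ev P x z + ev Q x z" by (simp add: ev_def)
lemma ev_mult: "ev (P * Q) x z = ev P x z * ev Q x z" by (simp add: ev_def)
lemma ev_const: "ev [:u:] x z = poly u z" by (simp add: ev_def)
lemma ev_linf: "ev (linf a b) x z = a * x + b * z"
  by (simp add: ev_def linf_def algebra_simps)

lemma ev_pCons: "ev (pCons u P) x z = poly u z + x * ev P x z"
  by (simp add: ev_def)

lemma ev_phiZ: "ev (phiZ L u) x z = poly u (ev L x z)"
proof (induction u)
  case 0 then show ?case by (simp add: ev_def)
next
  case (pCons a u)
  have "phiZ L (pCons a u) = phiZ L [:a:] + phiZ L [:0, 1:] * phiZ L u"
    by (subst pCons_split) (simp only: phiZ_add phiZ_mult)
  moreover have "phiZ L [:0, 1:] = L" by (simp add: phiZ_def c2_def map_poly_pCons)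
  ultimately show ?case using pCons by (simp add: ev_add ev_mult phiZ_const ev_const)
qed

lemma ev_Sb: "ev (Sb L1 L2 P) x z = ev P (ev L1 x z) (ev L2 x z)"
proof (induction P)
  case 0 then show ?case by (simp add: ev_def)
next
  case (pCons u P)
  have "Sb L1 L2 (pCons u P) = Sb L1 L2 [:u:] + Sb L1 L2 [:0, 1:] * Sb L1 L2 P"
    by (subst pCons_split) (simp only: Sb_add Sb_mult)
  moreover have "Sb L1 L2 [:0, 1:] = L1" by (simp add: Sb_def map_poly_pCons phiZ_const)
  ultimately show ?case using pCons by (simp only: ev_add ev_mult ev_phiZ ev_pCons Sb_const)
qed

section \<open>Homogeneous forms\<close>

definition homf :: "nat \<Rightarrow> 'a::field poly poly \<Rightarrow> bool" where
  "homf n P \<longleftrightarrow> (\<forall>i j. coeff (coeff P i) j \<noteq> 0 \<longrightarrow> i + j = n)"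

definition mono :: "nat \<Rightarrow> nat \<Rightarrow> 'a::field poly poly" where
  "mono n k = monom (monom 1 k) (n - k)"

lemma hom_0[simp]: "homf n 0" by (simp add: homf_def)
lemma hom_add: "homf n P \<Longrightarrow> homf n Q \<Longrightarrow> homf n (P + Q)"
  unfolding homf_def by (metis add.right_neutral add_0 coeff_add)
lemma hom_smult: "homf n P \<Longrightarrow> homf n (smult [:a:] P)"
  by (auto simp: homf_def)
lemma homf_sum: "(\<And>x. x \<in> A \<Longrightarrow> homf n (f x)) \<Longrightarrow> homf n (sum f A)"
  by (induction A rule: infinite_finite_induct) (auto intro: hom_add)
lemma hom_monom: "homf (i + j) (monom (monom a j) i)"
  by (simp add: homf_def)
lemma hom_mono: "k \<le> n \<Longrightarrow> homf n (mono n k)"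
  using hom_monom[of "n - k" k 1] by (simp add: mono_def)

lemma hom_mult:
  assumes P: "homf n P" and Q: "homf m Q"
  shows "homf (n + m) (P * Q)"
  unfolding homf_def
proof (intro allI impI)
  fix i j
  assume nz: "coeff (coeff (P * Q) i) j \<noteq> 0"
  show "i + j = n + m"
  proof (rule ccontr)
    assume ne: "i + j \<noteq> n + m"
    have "coeff (coeff (P * Q) i) j =
      (\<Sum>a\<le>i. \<Sum>b\<le>j. coeff (coeff P a) b * coeff (coeff Q (i - a)) (j - b))"
      by (simp add: coeff_mult coeff_sum)
    also have "\<dots> = 0"
    proof (intro sum.neutral ballI)
      fix a b assume "a \<in> {..i}" "b \<in> {..j}"
      then have ab: "a \<le> i" "b \<le> j" by auto
      show "coeff (coeff P a) b * coeff (coeff Q (i - a)) (j - b) = 0"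
      proof (cases "coeff (coeff P a) b = 0")
        case False
        then have "a + b = n" using P by (auto simp: homf_def)
        have "coeff (coeff Q (i - a)) (j - b) = 0"
        proof (rule ccontr)
          assume "coeff (coeff Q (i - a)) (j - b) \<noteq> 0"
          then have "(i - a) + (j - b) = m" using Q by (simp add: homf_def)
          then show False using ne ab \<open>a + b = n\<close> by arith
        qed
        then show ?thesis by simp
      qed simp
    qed
    finally show False using nz by simp
  qed
qed

lemma hom_pderiv: assumes "homf n P" shows "homf (n - 1) (pderiv P)"
  unfolding homf_def
proof (intro allI impI)
  fix i j assume "coeff (coeff (pderiv P) i) j \<noteq> 0"
  then have "coeff (coeff P (Suc i)) j \<noteq> 0" by (auto simp: coeff_pderiv of_nat_poly)
  then have "Suc i + j = n" using assms unfolding homf_def by blast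
  then show "i + j = n - 1" by simp
qed

lemma hom_D2: assumes "homf n P" shows "homf (n - 1) (D2 P)"
  unfolding homf_def
proof (intro allI impI)
  fix i j assume "coeff (coeff (D2 P) i) j \<noteq> 0"
  then have "coeff (coeff P i) (Suc j) \<noteq> 0" by (auto simp: D2_coeff coeff_pderiv)
  then have "i + Suc j = n" using assms unfolding homf_def by blast
  then show "i + j = n - 1" by simp
qed

lemma hom_dX: assumes "homf n P" shows "homf (n - k) (dX k P)"
proof (induction k)
  case 0 then show ?case using assms by (simp add: dX_def)
next
  case (Suc k)
  have "homf (n - k - 1) (pderiv (dX k P))" by (rule hom_pderiv[OF Suc])
  then show ?case by (simp add: dX_def)
qed

lemma hom_dZ: assumes "homf n P" shows "homf (n - k) (dZ k P)"
proof (induction k)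
  case 0 then show ?case using assms by (simp add: dZ_def)
next
  case (Suc k)
  have "homf (n - k - 1) (D2 (dZ k P))" by (rule hom_D2[OF Suc])
  then show ?case by (simp add: dZ_def)
qed

lemma hom_T:
  assumes "homf n P" "homf m Q" "r \<le> n" "r \<le> m"
  shows "homf (n + m - 2 * r) (transvectant n m r P Q)"
  unfolding transvectant_def
proof (intro hom_smult homf_sum)
  fix j assume "j \<in> {..r}"
  then have j: "j \<le> r" by simp
  have e1: "n - j - (r - j) = n - r" using j assms(3) by arith
  have e2: "m - (r - j) - j = m - r" using j assms(4) by arith
  have h1: "homf (n - r) (dX (r - j) (dZ j P))"
    using hom_dX[OF hom_dZ[OF assms(1), of j], of "r - j"] unfolding e1 .
  have h2: "homf (m - r) (dX j (dZ (r - j) Q))"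
    using hom_dX[OF hom_dZ[OF assms(2), of "r - j"], of j] unfolding e2 .
  have "homf ((n - r) + (m - r)) (dX (r - j) (dZ j P) * dX j (dZ (r - j) Q))"
    by (rule hom_mult[OF h1 h2])
  moreover have "(n - r) + (m - r) = n + m - 2 * r" using assms(3,4) by simp
  ultimately show "homf (n + m - 2 * r) (of_int ((- 1) ^ j * int (r choose j)) * dX (r - j) (dZ j P) * dX j (dZ (r - j) Q))"
    by (simp only: of_int_mult_pp mult_smult_left hom_smult)
qed

lemma hom_homog: "homf d (homog d f)"
  unfolding homog_def
proof (intro homf_sum)
  fix i assume "i \<in> {..d}"
  then show "homf d (monom (monom (coeff f i) (d - i)) i)"
    using hom_monom[of i "d - i" "coeff f i"] by simp
qed

lemma hom_expand:
  assumes "homf n P"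
  shows "P = (\<Sum>k\<le>n. smult [:coeff (coeff P (n - k)) k:] (mono n k))"
proof (rule poly_eqI)
  fix i
  show "coeff P i = coeff (\<Sum>k\<le>n. smult [:coeff (coeff P (n - k)) k:] (mono n k)) i"
  proof (rule poly_eqI)
    fix j
    have rhs: "coeff (coeff (\<Sum>k\<le>n. smult [:coeff (coeff P (n - k)) k:] (mono n k)) i) j
        = (\<Sum>k\<le>n. if n - k = i \<and> k = j then coeff (coeff P (n - k)) k else 0)"
      by (auto simp: coeff_sum mono_def intro!: sum.cong)
    show "coeff (coeff P i) j = coeff (coeff (\<Sum>k\<le>n. smult [:coeff (coeff P (n - k)) k:] (mono n k)) i) j"
    proof (cases "i + j = n")
      case True
      then have "(\<Sum>k\<le>n. if n - k = i \<and> k = j then coeff (coeff P (n - k)) k else 0)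
          = (\<Sum>k\<in>{j}. if n - k = i \<and> k = j then coeff (coeff P (n - k)) k else 0)"
        by (intro sum.mono_neutral_right) auto
      then show ?thesis using rhs True by simp
    next
      case False
      then have "coeff (coeff P i) j = 0" using assms by (auto simp: homf_def)
      moreover have "(\<Sum>k\<le>n. if n - k = i \<and> k = j then coeff (coeff P (n - k)) k else 0) = 0"
        using False by (intro sum.neutral) auto
      ultimately show ?thesis using rhs by simp
    qed
  qed
qed

abbreviation lc :: "'a::field \<Rightarrow> 'a poly poly" where "lc c \<equiv> linf 1 c"

lemma lc_pow: "(lc c) ^ n = (\<Sum>k\<le>n. smult [:of_nat (n choose k) * c ^ k:] (mono n k))"
proof -
  have "lc c = monom (monom c 1) 0 + monom 1 1"
    by (simp add: linf_def monom_altdef)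
  then have "(lc c) ^ n = (\<Sum>k\<le>n. of_nat (n choose k) * (monom (monom c 1) 0) ^ k * (monom 1 1) ^ (n - k))"
    by (simp add: binomial_ring)
  also have "\<dots> = (\<Sum>k\<le>n. smult [:of_nat (n choose k) * c ^ k:] (mono n k))"
  proof (rule sum.cong[OF refl])
    fix k
    show "of_nat (n choose k) * (monom (monom c 1) 0) ^ k * (monom 1 1) ^ (n - k) =
      smult [:of_nat (n choose k) * c ^ k:] (mono n k)"
      by (simp add: monom_power mult_monom mono_def of_nat_poly smult_monom)
  qed
  finally show ?thesis .
qed

lemma vanish:
  fixes v :: "nat \<Rightarrow> 'a::field_char_0 poly poly"
  assumes "\<And>c. (\<Sum>k\<le>n. smult [:c ^ k:] (v k)) = 0" "k \<le> n"
  shows "v k = 0"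
proof (rule poly_eqI)
  fix i
  show "coeff (v k) i = coeff 0 i"
  proof (rule poly_eqI)
    fix j
    let ?p = "\<Sum>k\<le>n. monom (coeff (coeff (v k) i) j) k"
    have "poly ?p c = 0" for c
    proof -
      have "poly ?p c = (\<Sum>k\<le>n. c ^ k * coeff (coeff (v k) i) j)"
        by (simp add: poly_sum poly_monom mult.commute)
      also have "\<dots> = coeff (coeff (\<Sum>k\<le>n. smult [:c ^ k:] (v k)) i) j"
        by (simp add: coeff_sum)
      also have "\<dots> = 0" using assms(1) by simp
      finally show ?thesis .
    qed
    then have "?p = 0" using poly_all_0_iff_0 by blast
    then have "coeff ?p k = 0" by simp
    moreover have "coeff ?p k = coeff (coeff (v k) i) j"
      using assms(2) by (simp add: coeff_sum)
    ultimately show "coeff (coeff (v k) i) j = coeff (coeff 0 i) j" by simp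
  qed
qed

lemma spanning:
  fixes L :: "'a::field_char_0 poly poly \<Rightarrow> 'a poly poly"
  assumes L: "lin L" and lc: "\<And>c. L ((lc c) ^ n) = 0" and P: "homf n P"
  shows "L P = 0"
proof -
  have m0: "L (mono n k) = 0" if k: "k \<le> n" for k
  proof -
    let ?v = "\<lambda>k. smult [:of_nat (n choose k):] (L (mono n k))"
    have "(\<Sum>k\<le>n. smult [:c ^ k:] (?v k)) = 0" for c
    proof -
      have "0 = L ((lc c) ^ n)" using lc by simp
      also have "\<dots> = (\<Sum>k\<le>n. smult [:of_nat (n choose k) * c ^ k:] (L (mono n k)))"
        by (simp add: lc_pow lin_sum[OF L] lin_smult[OF L])
      also have "\<dots> = (\<Sum>k\<le>n. smult [:c ^ k:] (?v k))"
        by (simp add: smult_smult mult.commute)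
      finally show ?thesis by simp
    qed
    then have "?v k = 0" using vanish[of ?v n k] k by blast
    then show ?thesis using k by simp
  qed
  have "L P = L (\<Sum>k\<le>n. smult [:coeff (coeff P (n - k)) k:] (mono n k))"
    using hom_expand[OF P] by simp
  also have "\<dots> = 0" by (simp add: lin_sum[OF L] lin_smult[OF L] m0)
  finally show ?thesis .
qed

lemma covariance:
  fixes a b c e :: "'a::field_char_0"
  assumes P: "homf n P" and Q: "homf m Q" and r: "r \<le> n" "r \<le> m"
  shows "transvectant n m r (Sb (linf a b) (linf c e) P) (Sb (linf a b) (linf c e) Q)
       = smult [:(a * e - b * c) ^ r:] (Sb (linf a b) (linf c e) (transvectant n m r P Q))"
proof -
  define Sm where "Sm = Sb (linf a b) (linf c e)"
  define d where "d = (a * e - b * c) ^ r"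
  define Psi where "Psi P Q = transvectant n m r (Sm P) (Sm Q) - smult [:d:] (Sm (transvectant n m r P Q))" for P Q
  have linS: "lin Sm" unfolding Sm_def by (rule lin_Sb)
  have lin1: "lin (\<lambda>P. Psi P Q)" for Q
    unfolding lin_def Psi_def
    by (simp add: lin_add[OF linS] lin_smult[OF linS] T_add1 T_smult1 smult_add_right smult_diff_right
        smult_smult mult.commute)
  have lin2: "lin (\<lambda>Q. Psi P Q)" for P
    unfolding lin_def Psi_def
    by (simp add: lin_add[OF linS] lin_smult[OF linS] T_add2 T_smult2 smult_add_right smult_diff_right
        smult_smult mult.commute)
  have base: "Psi ((lc x1) ^ n) ((lc x2) ^ m) = 0" for x1 x2
  proof -
    have e1: "Sm ((lc x1) ^ n) = (linf (a + x1 * c) (b + x1 * e)) ^ n"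
      unfolding Sm_def Sb_power Sb_linf by simp
    have e2: "Sm ((lc x2) ^ m) = (linf (a + x2 * c) (b + x2 * e)) ^ m"
      unfolding Sm_def Sb_power Sb_linf by simp
    have e3: "Sm (transvectant n m r ((lc x1) ^ n) ((lc x2) ^ m))
       = smult [:(x2 - x1) ^ r:] ((linf (a + x1 * c) (b + x1 * e)) ^ (n - r) * (linf (a + x2 * c) (b + x2 * e)) ^ (m - r))"
      unfolding T_lin[OF r] using linS
      by (simp add: lin_smult Sm_def Sb_mult Sb_power Sb_linf)
    have alg: "(a + x1 * c) * (b + x2 * e) - (b + x1 * e) * (a + x2 * c) = (a * e - b * c) * (x2 - x1)"
      by (simp add: algebra_simps)
    show ?thesis unfolding Psi_def e3 unfolding e1 e2 T_lin[OF r] alg d_def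
      by (simp add: smult_smult power_mult_distrib mult.commute)
  qed
  have step1: "Psi P ((lc x2) ^ m) = 0" for x2
    by (rule spanning[OF lin1 _ P]) (rule base)
  have "Psi P Q = 0"
    by (rule spanning[OF lin2 _ Q]) (rule step1)
  then show ?thesis unfolding Psi_def Sm_def d_def by simp
qed

lemma ev_0[simp]: "ev 0 x z = 0" by (simp add: ev_def)
lemma ev_smult: "ev (smult [:a:] P) x z = a * ev P x z" by (simp add: ev_def)
lemma ev_sum: "ev (sum f A) x z = (\<Sum>k\<in>A. ev (f k) x z)"
  by (induction A rule: infinite_finite_induct) (simp_all add: ev_add)
lemma ev_mono: "ev (mono n k) x z = x ^ (n - k) * z ^ k"
  by (simp add: ev_def mono_def poly_monom)

lemma ev_hom_expand:
  assumes "homf n P"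
  shows "ev P x z = (\<Sum>k\<le>n. coeff (coeff P (n - k)) k * (x ^ (n - k) * z ^ k))"
  by (subst hom_expand[OF assms]) (simp add: ev_sum ev_smult ev_mono)

lemma ev_hom_scale:
  assumes "homf n P"
  shows "ev P (t * x) (t * z) = t ^ n * ev P x z"
proof -
  have "ev P (t * x) (t * z) = (\<Sum>k\<le>n. coeff (coeff P (n - k)) k * ((t * x) ^ (n - k) * (t * z) ^ k))"
    by (rule ev_hom_expand[OF assms])
  also have "\<dots> = (\<Sum>k\<le>n. t ^ n * (coeff (coeff P (n - k)) k * (x ^ (n - k) * z ^ k)))"
  proof (rule sum.cong[OF refl])
    fix k assume "k \<in> {..n}"
    then have "t ^ (n - k) * t ^ k = t ^ n" by (simp add: power_add[symmetric])
    then show "coeff (coeff P (n - k)) k * ((t * x) ^ (n - k) * (t * z) ^ k) =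
        t ^ n * (coeff (coeff P (n - k)) k * (x ^ (n - k) * z ^ k))"
      by (simp add: power_mult_distrib algebra_simps)
  qed
  also have "\<dots> = t ^ n * ev P x z" by (simp add: ev_hom_expand[OF assms] sum_distrib_left)
  finally show ?thesis .
qed

lemma ev_inj:
  fixes P Q :: "'a::field_char_0 poly poly"
  assumes "\<And>x z. ev P x z = ev Q x z"
  shows "P = Q"
proof (rule ccontr)
  assume ne: "P \<noteq> Q"
  have "poly (P - Q) [:x:] = 0" for x
  proof -
    have "\<forall>z. poly (poly (P - Q) [:x:]) z = 0" using assms by (simp add: ev_def)
    then show ?thesis using poly_all_0_iff_0 by blast
  qed
  then have sub: "range (\<lambda>x. [:x:]) \<subseteq> {y. poly (P - Q) y = 0}" by auto
  have "finite {y. poly (P - Q) y = 0}" using ne by (intro poly_roots_finite) simp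
  then have "finite (range (\<lambda>x::'a. [:x:]))" using sub finite_subset by blast
  moreover have "inj (\<lambda>x::'a. [:x:])" by (auto intro: injI)
  ultimately have "finite (UNIV :: 'a set)" using finite_imageD by blast
  then show False using infinite_UNIV_char_0 by blast
qed

section \<open>Dehomogenisation and roots\<close>

definition dehom :: "nat \<Rightarrow> 'a::field poly poly \<Rightarrow> 'a poly" where
  "dehom n P = (\<Sum>k\<le>n. monom (coeff (coeff P (n - k)) k) (n - k))"

lemma poly_dehom: "homf n P \<Longrightarrow> poly (dehom n P) x = ev P x 1"
  by (simp add: dehom_def poly_sum poly_monom ev_hom_expand mult.commute)

lemma coeff_dehom: "i \<le> n \<Longrightarrow> coeff (dehom n P) i = coeff (coeff P i) (n - i)"
proof -
  assume i: "i \<le> n"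
  have "coeff (dehom n P) i = (\<Sum>k\<le>n. if n - k = i then coeff (coeff P (n - k)) k else 0)"
    by (simp add: dehom_def coeff_sum)
  also have "\<dots> = (\<Sum>k\<in>{n - i}. if n - k = i then coeff (coeff P (n - k)) k else 0)"
    using i by (intro sum.mono_neutral_right) auto
  also have "\<dots> = coeff (coeff P i) (n - i)" using i by simp
  finally show ?thesis .
qed

lemma degree_dehom: "degree (dehom n P) \<le> n"
  by (rule degree_le) (auto simp: dehom_def coeff_sum intro!: sum.neutral)

lemma dehom_nz:
  assumes "homf n P" "P \<noteq> 0"
  shows "dehom n P \<noteq> 0"
proof -
  obtain i where "coeff P i \<noteq> 0" using assms(2) by (metis leading_coeff_0_iff)
  then obtain j where ij: "coeff (coeff P i) j \<noteq> 0" by (metis leading_coeff_0_iff)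
  then have "i + j = n" using assms(1) by (simp add: homf_def)
  then have "coeff (dehom n P) i \<noteq> 0" using ij coeff_dehom[of i n P]
    by (metis add_diff_cancel_left' le_add1)
  then show ?thesis by auto
qed

section \<open>Projective line\<close>

definition mv :: "'a::field \<times> 'a \<times> 'a \<times> 'a \<Rightarrow> 'a \<times> 'a \<Rightarrow> 'a \<times> 'a" where
  "mv M w = (case M of (a, b, c, e) \<Rightarrow> (a * fst w + b * snd w, c * fst w + e * snd w))"
definition sv :: "'a::field \<Rightarrow> 'a \<times> 'a \<Rightarrow> 'a \<times> 'a" where
  "sv t w = (t * fst w, t * snd w)"
definition pt :: "'a::field \<times> 'a \<Rightarrow> ('a \<times> 'a) set" where
  "pt w = {sv t w | t. t \<noteq> 0}"
definition P1 :: "('a::field \<times> 'a) set set" where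
  "P1 = {pt w | w. w \<noteq> (0, 0)}"
definition actl :: "'a::field \<times> 'a \<times> 'a \<times> 'a \<Rightarrow> ('a \<times> 'a) set \<Rightarrow> ('a \<times> 'a) set" where
  "actl M L = mv M ` L"
definition smat :: "'a::field \<Rightarrow> 'a \<times> 'a \<times> 'a \<times> 'a \<Rightarrow> 'a \<times> 'a \<times> 'a \<times> 'a" where
  "smat s M = (case M of (a, b, c, e) \<Rightarrow> (s * a, s * b, s * c, s * e))"

lemma sv_sv: "sv s (sv t w) = sv (s * t) w" by (simp add: sv_def)
lemma sv_1[simp]: "sv 1 w = w" by (simp add: sv_def)
lemma sv_nz: "t \<noteq> 0 \<Longrightarrow> w \<noteq> (0, 0) \<Longrightarrow> sv t w \<noteq> (0, 0)"
  by (cases w) (auto simp: sv_def)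
lemma mv_sv: "mv M (sv t w) = sv t (mv M w)"
  by (cases M) (simp add: mv_def sv_def algebra_simps)
lemma mem_pt: "w \<in> pt w" unfolding pt_def by (rule CollectI, rule exI[of _ 1]) simp
lemma in_pt_iff: "u \<in> pt w \<longleftrightarrow> (\<exists>t. t \<noteq> 0 \<and> u = sv t w)"
  by (auto simp: pt_def)
lemma pt_sv: assumes t: "t \<noteq> 0" shows "pt (sv t w) = pt w"
proof (rule Set.set_eqI)
  fix u
  show "u \<in> pt (sv t w) \<longleftrightarrow> u \<in> pt w"
  proof
    assume "u \<in> pt (sv t w)"
    then obtain s where "s \<noteq> 0" "u = sv s (sv t w)" by (auto simp: in_pt_iff)
    then show "u \<in> pt w" using t by (auto simp: in_pt_iff sv_sv intro!: exI[of _ "s * t"])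
  next
    assume "u \<in> pt w"
    then obtain s where s: "s \<noteq> 0" "u = sv s w" by (auto simp: in_pt_iff)
    then have "u = sv (s / t) (sv t w)" using t by (simp add: sv_sv)
    then show "u \<in> pt (sv t w)" using s t by (auto simp: in_pt_iff intro!: exI[of _ "s / t"])
  qed
qed
lemma pt_eqI: "u \<in> pt w \<Longrightarrow> pt u = pt w"
  by (auto simp: in_pt_iff pt_sv)

lemma actl_pt: "actl M (pt w) = pt (mv M w)"
proof (rule Set.set_eqI)
  fix x
  show "x \<in> actl M (pt w) \<longleftrightarrow> x \<in> pt (mv M w)"
  proof
    assume "x \<in> actl M (pt w)"
    then obtain u where "u \<in> pt w" "x = mv M u" by (auto simp: actl_def)
    then show "x \<in> pt (mv M w)" by (auto simp: in_pt_iff mv_sv)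
  next
    assume "x \<in> pt (mv M w)"
    then obtain t where t: "t \<noteq> 0" "x = sv t (mv M w)" by (auto simp: in_pt_iff)
    then have "x = mv M (sv t w)" by (simp add: mv_sv)
    moreover have "sv t w \<in> pt w" using t by (auto simp: in_pt_iff)
    ultimately show "x \<in> actl M (pt w)" by (auto simp: actl_def)
  qed
qed
lemma mv_nz:
  assumes "mat_det M \<noteq> 0" "w \<noteq> (0, 0)"
  shows "mv M w \<noteq> (0, 0)"
proof
  obtain a b c e where M: "M = (a, b, c, e)" by (cases M) auto
  obtain x z where w: "w = (x, z)" by (cases w) auto
  assume h: "mv M w = (0, 0)"
  then have h1: "a * x + b * z = 0" "c * x + e * z = 0" by (auto simp: M w mv_def)
  have d: "a * e - b * c \<noteq> 0" using assms(1) by (simp add: M mat_det_def)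
  have "(a * e - b * c) * x = e * (a * x + b * z) - b * (c * x + e * z)" by (simp add: algebra_simps)
  then have "x = 0" using h1 d by simp
  have "(a * e - b * c) * z = a * (c * x + e * z) - c * (a * x + b * z)" by (simp add: algebra_simps)
  then have "z = 0" using h1 d by simp
  then show False using \<open>x = 0\<close> assms(2) w by simp
qed

lemma actl_P1: "mat_det M \<noteq> 0 \<Longrightarrow> L \<in> P1 \<Longrightarrow> actl M L \<in> P1"
  unfolding P1_def using actl_pt mv_nz by blast

lemma mv_mult: "mv (mat_mult M N) w = mv M (mv N w)"
  by (cases M, cases N) (simp add: mv_def mat_mult_def algebra_simps)

lemma actl_mult: "actl (mat_mult M N) L = actl M (actl N L)"
  by (simp add: actl_def mv_mult image_image)

lemma mv_smat: "mv (smat s M) w = sv s (mv M w)"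
  by (cases M) (simp add: mv_def smat_def sv_def algebra_simps)

lemma actl_smat: "s \<noteq> 0 \<Longrightarrow> L \<in> P1 \<Longrightarrow> actl (smat s M) L = actl M L"
  unfolding P1_def by (auto simp: actl_pt mv_smat pt_sv)

lemma det_smat: "mat_det (smat s M) = s ^ 2 * mat_det M"
  by (cases M) (simp add: mat_det_def smat_def power2_eq_square algebra_simps)

lemma det_mult: "mat_det (mat_mult M N) = mat_det M * mat_det N"
  by (cases M, cases N) (simp add: mat_det_def mat_mult_def algebra_simps)

lemma smat_smat: "smat s (smat t M) = smat (s * t) M"
  by (cases M) (simp add: smat_def)

lemma smat_1[simp]: "smat 1 M = M"
  by (cases M) (simp add: smat_def)

lemma mult_smat: "mat_mult (smat s M) (smat t N) = smat (s * t) (mat_mult M N)"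
  by (cases M, cases N) (simp add: smat_def mat_mult_def algebra_simps)

lemma proj_class_alt: "proj_class M = {smat t M | t. t \<noteq> 0}"
  by (cases M) (auto simp: proj_class_def smat_def)

lemma in_proj_class_iff: "N \<in> proj_class M \<longleftrightarrow> (\<exists>t. t \<noteq> 0 \<and> N = smat t M)"
  by (auto simp: proj_class_alt)

lemma proj_class_smat: assumes t: "t \<noteq> 0" shows "proj_class (smat t M) = proj_class M"
proof (rule Set.set_eqI)
  fix N
  show "N \<in> proj_class (smat t M) \<longleftrightarrow> N \<in> proj_class M"
  proof
    assume "N \<in> proj_class (smat t M)"
    then obtain s where "s \<noteq> 0" "N = smat s (smat t M)" by (auto simp: in_proj_class_iff)
    then show "N \<in> proj_class M" using t by (auto simp: in_proj_class_iff smat_smat intro!: exI[of _ "s * t"])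
  next
    assume "N \<in> proj_class M"
    then obtain s where s: "s \<noteq> 0" "N = smat s M" by (auto simp: in_proj_class_iff)
    then have "N = smat (s / t) (smat t M)" using t by (simp add: smat_smat)
    then show "N \<in> proj_class (smat t M)" using s t by (auto simp: in_proj_class_iff intro!: exI[of _ "s / t"])
  qed
qed

lemma mem_proj_class: "M \<in> proj_class M"
  unfolding proj_class_alt by (rule CollectI, rule exI[of _ 1]) simp

definition evv :: "'a::field poly poly \<Rightarrow> 'a \<times> 'a \<Rightarrow> 'a" where
  "evv P w = ev P (fst w) (snd w)"

lemma evv_S: "evv (S M P) w = evv P (mv M w)"
  by (cases M) (simp add: evv_def S_def ev_Sb ev_linf mv_def)

lemma evv_sv: "homf n P \<Longrightarrow> evv P (sv t w) = t ^ n * evv P w"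
  by (simp add: evv_def sv_def ev_hom_scale)

lemma evv_smult: "evv (smult [:a:] P) w = a * evv P w"
  by (simp add: evv_def ev_smult)

definition Zs :: "'a::field poly poly \<Rightarrow> ('a \<times> 'a) set set" where
  "Zs P = {pt w | w. w \<noteq> (0, 0) \<and> evv P w = 0}"

lemma Zs_memI: "w \<noteq> (0, 0) \<Longrightarrow> evv P w = 0 \<Longrightarrow> pt w \<in> Zs P"
  unfolding Zs_def by blast

lemma Zs_P1: "Zs P \<subseteq> P1" by (auto simp: Zs_def P1_def)

lemma Zs_inv:
  assumes "mat_det M \<noteq> 0" "S M P = smult [:\<mu>:] P" "L \<in> Zs P"
  shows "actl M L \<in> Zs P"
proof -
  obtain w where w: "L = pt w" "w \<noteq> (0, 0)" "evv P w = 0" using assms(3) by (auto simp: Zs_def)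
  have "evv P (mv M w) = evv (S M P) w" by (simp add: evv_S)
  also have "\<dots> = 0" using w assms(2) by (simp add: evv_smult)
  finally have "evv P (mv M w) = 0" .
  then show ?thesis using w mv_nz[OF assms(1) w(2)] Zs_memI by (simp add: actl_pt)
qed

lemma Zs_finite_card:
  fixes P :: "'a::field_char_0 poly poly"
  assumes h: "homf n P" and nz: "P \<noteq> 0"
  shows "finite (Zs P) \<and> card (Zs P) \<le> n + 1"
proof -
  let ?p = "dehom n P"
  let ?R = "{x. poly ?p x = 0}"
  have pnz: "?p \<noteq> 0" by (rule dehom_nz[OF h nz])
  have sub: "Zs P \<subseteq> (\<lambda>x. pt (x, 1)) ` ?R \<union> {pt (1, 0)}"
  proof
    fix L assume "L \<in> Zs P"
    then obtain x z where L: "L = pt (x, z)" "(x, z) \<noteq> (0, 0)" "evv P (x, z) = 0"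
      by (auto simp: Zs_def)
    show "L \<in> (\<lambda>x. pt (x, 1)) ` ?R \<union> {pt (1, 0)}"
    proof (cases "z = 0")
      case True
      then have x: "x \<noteq> 0" using L by simp
      have "pt (x, z) = pt (sv (1 / x) (x, z))" using x by (simp add: pt_sv)
      also have "\<dots> = pt (1, 0)" using x True by (simp add: sv_def)
      finally show ?thesis using L by simp
    next
      case False
      have e: "sv (1 / z) (x, z) = (x / z, 1)" using False by (simp add: sv_def)
      have "pt (x, z) = pt (x / z, 1)" using False pt_sv[of "1 / z" "(x, z)"] e by simp
      moreover have "evv P (x / z, 1) = 0" using evv_sv[OF h, of "1 / z" "(x, z)"] e L(3) by simp
      then have "poly ?p (x / z) = 0" using poly_dehom[OF h] by (simp add: evv_def)
      ultimately show ?thesis using L by auto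
    qed
  qed
  have fR: "finite ?R" using poly_roots_finite[OF pnz] .
  have cR: "card ?R \<le> n" using card_poly_roots_bound[OF pnz] degree_dehom[of n P] by linarith
  have fin: "finite ((\<lambda>x. pt (x, 1)) ` ?R \<union> {pt (1, 0)})" using fR by simp
  have "card ((\<lambda>x. pt (x, 1)) ` ?R \<union> {pt (1, 0)}) \<le> card ((\<lambda>x. pt (x, 1)) ` ?R) + 1"
    using card_Un_le[of "(\<lambda>x. pt (x, 1)) ` ?R" "{pt (1, 0)}"] by simp
  also have "\<dots> \<le> card ?R + 1" using card_image_le[OF fR] by simp
  finally have "card ((\<lambda>x. pt (x, 1)) ` ?R \<union> {pt (1, 0)}) \<le> n + 1" using cR by simp
  then show ?thesis using sub fin card_mono[OF fin sub] finite_subset[OF sub fin] by simp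
qed

lemma Zs_nonempty:
  fixes P :: "'a::{alg_closed_field, field_char_0} poly poly"
  assumes h: "homf n P" and nz: "P \<noteq> 0" and n: "n \<ge> 1"
  shows "Zs P \<noteq> {}"
proof (cases "evv P (1, 0) = 0")
  case True
  then have "pt (1, 0) \<in> Zs P" by (intro Zs_memI) auto
  then show ?thesis by auto
next
  case False
  let ?p = "dehom n P"
  have "evv P (1, 0) = coeff (coeff P n) 0"
  proof -
    have "evv P (1, 0) = (\<Sum>k\<le>n. coeff (coeff P (n - k)) k * (1 ^ (n - k) * 0 ^ k))"
      by (simp add: evv_def ev_hom_expand[OF h])
    also have "\<dots> = (\<Sum>k\<in>{0}. coeff (coeff P (n - k)) k * (1 ^ (n - k) * 0 ^ k))"
      by (intro sum.mono_neutral_right) auto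
    finally show ?thesis by simp
  qed
  then have "coeff ?p n \<noteq> 0" using False coeff_dehom[of n n P] by simp
  then have "degree ?p = n" using degree_dehom[of n P] le_degree by (metis antisym)
  then obtain x where "poly ?p x = 0" using alg_closed_imp_poly_has_root n by (metis gr0I not_one_le_zero)
  then have "evv P (x, 1) = 0" using poly_dehom[OF h] by (simp add: evv_def)
  then have "pt (x, 1) \<in> Zs P" by (intro Zs_memI) auto
  then show ?thesis by auto
qed

lemma evv_inj:
  fixes P Q :: "'a::field_char_0 poly poly"
  assumes "\<And>w. evv P w = evv Q w"
  shows "P = Q"
  using assms by (intro ev_inj) (metis evv_def fst_conv snd_conv)

lemma stab_iff:
  "M \<in> form_stab d f \<longleftrightarrow> mat_det M \<noteq> 0 \<and> (\<exists>lam. lam \<noteq> 0 \<and> S M (homog d f) = smult [:lam:] (homog d f))"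
  by (simp add: form_stab_def form_subst_S)

lemma stab_mult:
  fixes f :: "'a::field_char_0 poly"
  assumes "M \<in> form_stab d f" "N \<in> form_stab d f"
  shows "mat_mult M N \<in> form_stab d f"
proof -
  let ?F = "homog d f"
  obtain l1 where l1: "l1 \<noteq> 0" "S M ?F = smult [:l1:] ?F" "mat_det M \<noteq> 0" using assms(1) stab_iff by blast
  obtain l2 where l2: "l2 \<noteq> 0" "S N ?F = smult [:l2:] ?F" "mat_det N \<noteq> 0" using assms(2) stab_iff by blast
  have "S (mat_mult M N) ?F = smult [:l1 * l2:] ?F"
  proof (rule evv_inj)
    fix w
    have "evv (S (mat_mult M N) ?F) w = evv ?F (mv M (mv N w))" by (simp add: evv_S mv_mult)
    also have "\<dots> = evv (S M ?F) (mv N w)" by (simp add: evv_S)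
    also have "\<dots> = l1 * evv (S N ?F) w" by (simp add: l1 evv_smult evv_S)
    also have "\<dots> = evv (smult [:l1 * l2:] ?F) w" by (simp add: l2 evv_smult)
    finally show "evv (S (mat_mult M N) ?F) w = evv (smult [:l1 * l2:] ?F) w" .
  qed
  moreover have "mat_det (mat_mult M N) \<noteq> 0" using l1 l2 by (simp add: det_mult)
  ultimately show ?thesis using l1 l2 stab_iff by (metis mult_eq_0_iff)
qed

lemma stab_smat:
  fixes f :: "'a::field_char_0 poly"
  assumes "M \<in> form_stab d f" "t \<noteq> 0"
  shows "smat t M \<in> form_stab d f"
proof -
  let ?F = "homog d f"
  obtain l1 where l1: "l1 \<noteq> 0" "S M ?F = smult [:l1:] ?F" "mat_det M \<noteq> 0" using assms(1) stab_iff by blast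
  have "S (smat t M) ?F = smult [:t ^ d * l1:] ?F"
  proof (rule evv_inj)
    fix w
    have "evv (S (smat t M) ?F) w = evv ?F (sv t (mv M w))" by (simp add: evv_S mv_smat)
    also have "\<dots> = t ^ d * evv ?F (mv M w)" by (simp add: evv_sv[OF hom_homog])
    also have "\<dots> = t ^ d * evv (S M ?F) w" by (simp add: evv_S)
    also have "\<dots> = evv (smult [:t ^ d * l1:] ?F) w" by (simp add: l1 evv_smult)
    finally show "evv (S (smat t M) ?F) w = evv (smult [:t ^ d * l1:] ?F) w" .
  qed
  moreover have "mat_det (smat t M) \<noteq> 0" using l1 assms(2) by (simp add: det_smat)
  ultimately show ?thesis using l1 assms(2) stab_iff by (metis mult_eq_0_iff power_not_zero)
qed

lemma stab_one:
  fixes f :: "'a::field_char_0 poly"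
  shows "(1, 0, 0, 1) \<in> form_stab d f"
proof -
  let ?F = "homog d f"
  have "S (1, 0, 0, 1) ?F = smult [:1:] ?F"
    by (rule evv_inj) (simp add: evv_S mv_def evv_smult)
  then show ?thesis using stab_iff[of "(1, 0, 0, 1)" d f] by (auto simp: mat_det_def intro!: exI[of _ 1])
qed

lemma J_semi_inv:
  fixes f :: "'a::field_char_0 poly"
  assumes "M \<in> form_stab d f" "r \<le> d"
  shows "\<exists>\<mu>. \<mu> \<noteq> 0 \<and> S M (transvectant d d r (homog d f) (homog d f))
                 = smult [:\<mu>:] (transvectant d d r (homog d f) (homog d f))"
proof -
  let ?F = "homog d f"
  let ?J = "transvectant d d r ?F ?F"
  obtain a b c e where M: "M = (a, b, c, e)" by (cases M) auto
  obtain l1 where l1: "l1 \<noteq> 0" "S M ?F = smult [:l1:] ?F" "mat_det M \<noteq> 0" using assms(1) stab_iff by blast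
  have SM: "S M = Sb (linf a b) (linf c e)" by (simp add: M S_def)
  have cov: "transvectant d d r (S M ?F) (S M ?F) = smult [:(a * e - b * c) ^ r:] (S M ?J)"
    unfolding SM by (rule covariance[OF hom_homog hom_homog assms(2) assms(2)])
  have "transvectant d d r (S M ?F) (S M ?F) = smult [:l1 * l1:] ?J"
    by (simp add: l1 T_smult1 T_smult2 smult_smult)
  then have eq: "smult [:(a * e - b * c) ^ r:] (S M ?J) = smult [:l1 * l1:] ?J" using cov by simp
  have dnz: "a * e - b * c \<noteq> 0" using l1(3) by (simp add: M mat_det_def)
  have "S M ?J = smult [:l1 * l1 / (a * e - b * c) ^ r:] ?J"
  proof -
    have "S M ?J = smult [:1 / (a * e - b * c) ^ r:] (smult [:(a * e - b * c) ^ r:] (S M ?J))"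
      using dnz by (simp add: smult_smult)
    also have "\<dots> = smult [:l1 * l1 / (a * e - b * c) ^ r:] ?J"
      unfolding eq by (simp add: smult_smult)
    finally show ?thesis .
  qed
  moreover have "l1 * l1 / (a * e - b * c) ^ r \<noteq> 0" using l1 dnz by simp
  ultimately show ?thesis by blast
qed

lemma alt_pow: "p [^]\<^bsub>alt_group n\<^esub> (k::nat) = p ^^ k"
  by (induction k) (simp_all add: alt_group_one alt_group_mult comp_def funpow_swap1)

lemma alt_elem_orders:
  assumes "p \<in> carrier (alt_group 5)"
  shows "p [^]\<^bsub>alt_group 5\<^esub> (2::nat) = id \<or> p [^]\<^bsub>alt_group 5\<^esub> (3::nat) = id \<or> p [^]\<^bsub>alt_group 5\<^esub> (5::nat) = id"
  using a5_orders assms by (simp add: alt_pow alt_group_carrier)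

lemma order_alt5: "order (alt_group 5) = 60"
  using alt_group_card_carrier[of 5] by (simp add: order_def fact_numeral)

definition rep :: "('a::field \<times> 'a \<times> 'a \<times> 'a) set \<Rightarrow> 'a \<times> 'a \<times> 'a \<times> 'a" where
  "rep A = (SOME M. M \<in> A)"

lemma rep_props:
  fixes f :: "'a::field_char_0 poly"
  assumes "A \<in> carrier (red_aut_group d f)"
  shows "rep A \<in> A" "rep A \<in> form_stab d f" "A = proj_class (rep A)" "mat_det (rep A) \<noteq> 0"
proof -
  obtain M0 where M0: "M0 \<in> form_stab d f" "A = proj_class M0"
    using assms by (auto simp: red_aut_group_def)
  have "M0 \<in> A" using M0 mem_proj_class by simp
  then show r: "rep A \<in> A" unfolding rep_def by (rule someI)
  then obtain t where t: "t \<noteq> 0" "rep A = smat t M0" using M0 by (auto simp: in_proj_class_iff)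
  show s: "rep A \<in> form_stab d f" using t stab_smat[OF M0(1) t(1)] by simp
  show "A = proj_class (rep A)" using t M0 proj_class_smat[OF t(1)] by simp
  show "mat_det (rep A) \<noteq> 0" using s by (simp add: form_stab_def)
qed

lemma RA_mult: "mult (red_aut_group d f) A B = proj_class (mat_mult (rep A) (rep B))"
  by (simp add: red_aut_group_def rep_def)

lemma RA_closed:
  fixes f :: "'a::field_char_0 poly"
  assumes "A \<in> carrier (red_aut_group d f)" "B \<in> carrier (red_aut_group d f)"
  shows "mult (red_aut_group d f) A B \<in> carrier (red_aut_group d f)"
  unfolding RA_mult using imageI[OF stab_mult[OF rep_props(2)[OF assms(1)] rep_props(2)[OF assms(2)]], of proj_class]
  by (simp add: red_aut_group_def)

lemma RA_one_carrier:
  fixes f :: "'a::field_char_0 poly"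
  shows "proj_class (1, 0, 0, 1) \<in> carrier (red_aut_group d f)"
  using imageI[OF stab_one, of proj_class] by (simp add: red_aut_group_def)

lemma RA_one_idem:
  fixes f :: "'a::field_char_0 poly"
  shows "mult (red_aut_group d f) (proj_class (1, 0, 0, 1)) (proj_class (1, 0, 0, 1)) = proj_class (1, 0, 0, 1)"
proof -
  let ?E = "proj_class (1, 0, 0, 1) :: ('a \<times> 'a \<times> 'a \<times> 'a) set"
  have "rep ?E \<in> ?E" using rep_props(1)[OF RA_one_carrier] .
  then obtain t where t: "t \<noteq> 0" "rep ?E = smat t (1, 0, 0, 1)" by (auto simp: in_proj_class_iff)
  have "mat_mult (rep ?E) (rep ?E) = smat (t * t) (1, 0, 0, 1)"
    using t by (simp add: mat_mult_def smat_def)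
  then show ?thesis using t by (simp add: RA_mult proj_class_smat)
qed

locale a5setup =
  fixes f :: "'a::{alg_closed_field, field_char_0} poly" and d :: nat and phi
  assumes iso: "phi \<in> iso (red_aut_group d f) (alt_group 5)"
begin

abbreviation "RA \<equiv> red_aut_group d f"
abbreviation "G \<equiv> alt_group 5"

definition psi where "psi = inv_into (carrier RA) phi"

lemma phi_hom: "phi \<in> hom RA G" using iso by (simp add: iso_def)
lemma phi_bij: "bij_betw phi (carrier RA) (carrier G)" using iso by (simp add: iso_def)

lemma psi_carrier: "s \<in> carrier G \<Longrightarrow> psi s \<in> carrier RA"
  unfolding psi_def using phi_bij by (simp add: bij_betw_imp_surj_on inv_into_into)

lemma phi_psi: "s \<in> carrier G \<Longrightarrow> phi (psi s) = s"
  unfolding psi_def using phi_bij by (simp add: bij_betw_imp_surj_on f_inv_into_f)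

lemma psi_phi: "A \<in> carrier RA \<Longrightarrow> psi (phi A) = A"
  unfolding psi_def using phi_bij by (simp add: bij_betw_def inv_into_f_f)

lemma psi_inj: "s \<in> carrier G \<Longrightarrow> t \<in> carrier G \<Longrightarrow> psi s = psi t \<Longrightarrow> s = t"
  by (metis phi_psi)

lemma psi_mult:
  assumes "s \<in> carrier G" "t \<in> carrier G"
  shows "psi (s \<otimes>\<^bsub>G\<^esub> t) = mult RA (psi s) (psi t)"
proof -
  have c: "mult RA (psi s) (psi t) \<in> carrier RA" using RA_closed psi_carrier assms by blast
  have "phi (mult RA (psi s) (psi t)) = phi (psi s) \<otimes>\<^bsub>G\<^esub> phi (psi t)"
    using phi_hom psi_carrier assms by (simp add: hom_def)
  then have "phi (mult RA (psi s) (psi t)) = s \<otimes>\<^bsub>G\<^esub> t" using phi_psi assms by simp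
  then show ?thesis using psi_phi[OF c] by metis
qed

lemma psi_one: "psi \<one>\<^bsub>G\<^esub> = proj_class (1, 0, 0, 1)"
proof -
  let ?E = "proj_class (1, 0, 0, 1) :: ('a \<times> 'a \<times> 'a \<times> 'a) set"
  have E: "?E \<in> carrier RA" by (rule RA_one_carrier)
  have pE: "phi ?E \<in> carrier G" using phi_hom E by (auto simp: hom_def)
  have "phi ?E = phi (mult RA ?E ?E)" using RA_one_idem[of d f] by simp
  also have "\<dots> = phi ?E \<otimes>\<^bsub>G\<^esub> phi ?E" using phi_hom E by (simp add: hom_def)
  finally have "phi ?E = phi ?E \<otimes>\<^bsub>G\<^esub> phi ?E" .
  then have "phi ?E = \<one>\<^bsub>G\<^esub>"
    using group.l_cancel_one'[OF alt_group_is_group pE pE] by simp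
  then show ?thesis using psi_phi[OF E] by simp
qed

definition R where "R s = rep (psi s)"

lemma R_stab: "s \<in> carrier G \<Longrightarrow> R s \<in> form_stab d f"
  unfolding R_def using rep_props(2) psi_carrier by blast
lemma R_det: "s \<in> carrier G \<Longrightarrow> mat_det (R s) \<noteq> 0"
  unfolding R_def using rep_props(4) psi_carrier by blast
lemma R_class: "s \<in> carrier G \<Longrightarrow> psi s = proj_class (R s)"
  unfolding R_def using rep_props(3) psi_carrier by blast

lemma R_mult:
  assumes "s \<in> carrier G" "t \<in> carrier G"
  shows "\<exists>c. c \<noteq> 0 \<and> R (s \<otimes>\<^bsub>G\<^esub> t) = smat c (mat_mult (R s) (R t))"
proof -
  have st: "s \<otimes>\<^bsub>G\<^esub> t \<in> carrier G" using assms alt_group_is_group[of 5] group.is_monoid monoid.m_closed by metis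
  have "R (s \<otimes>\<^bsub>G\<^esub> t) \<in> psi (s \<otimes>\<^bsub>G\<^esub> t)"
    unfolding R_def using rep_props(1) psi_carrier[OF st] by blast
  also have "psi (s \<otimes>\<^bsub>G\<^esub> t) = proj_class (mat_mult (R s) (R t))"
    using psi_mult[OF assms] by (simp add: RA_mult R_def)
  finally show ?thesis by (auto simp: in_proj_class_iff)
qed

lemma R_one: "\<exists>c. c \<noteq> 0 \<and> R \<one>\<^bsub>G\<^esub> = smat c (1, 0, 0, 1)"
proof -
  have one: "\<one>\<^bsub>G\<^esub> \<in> carrier G" using alt_group_is_group[of 5] group.is_monoid monoid.one_closed by metis
  have "R \<one>\<^bsub>G\<^esub> \<in> psi \<one>\<^bsub>G\<^esub>" unfolding R_def using rep_props(1) psi_carrier[OF one] by blast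
  then show ?thesis using psi_one by (auto simp: in_proj_class_iff)
qed

end

lemma sv_inj: "v \<noteq> (0, 0) \<Longrightarrow> sv t v = sv t' v \<Longrightarrow> t = t'"
  by (cases v) (auto simp: sv_def)

lemma mv_one: "mv (1, 0, 0, 1) w = w" by (simp add: mv_def)

lemma actl_one: "actl (1, 0, 0, 1) L = L" by (simp add: actl_def mv_one)

lemma actl_bij:
  assumes d: "mat_det M \<noteq> 0"
  shows "bij_betw (actl M) P1 P1"
proof -
  obtain a b c e where M: "M = (a, b, c, e)" by (cases M) auto
  let ?D = "a * e - b * c"
  have D: "?D \<noteq> 0" using d by (simp add: M mat_det_def)
  let ?N = "(e / ?D, - b / ?D, - c / ?D, a / ?D)"
  have Nd: "?N = smat (1 / ?D) (e, - b, - c, a)" by (simp add: smat_def)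
  have adj1: "mat_mult (e, - b, - c, a) M = smat ?D (1, 0, 0, 1)"
    by (simp add: M mat_mult_def smat_def algebra_simps)
  have adj2: "mat_mult M (e, - b, - c, a) = smat ?D (1, 0, 0, 1)"
    by (simp add: M mat_mult_def smat_def algebra_simps)
  have NM: "mat_mult ?N M = (1, 0, 0, 1)"
    using mult_smat[of "1 / ?D" "(e, - b, - c, a)" 1 M] D
    by (simp only: Nd smat_1 adj1 smat_smat) simp
  have MN: "mat_mult M ?N = (1, 0, 0, 1)"
    using mult_smat[of 1 M "1 / ?D" "(e, - b, - c, a)"] D
    by (simp only: Nd smat_1 adj2 smat_smat) simp
  have dN: "mat_det ?N \<noteq> 0"
  proof
    assume "mat_det ?N = 0"
    then have "mat_det (mat_mult M ?N) = 0" by (metis det_mult mult_zero_right)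
    then show False using MN by (simp add: mat_det_def)
  qed
  show ?thesis
  proof (rule bij_betw_byWitness[where f' = "actl ?N"])
    show "\<forall>L\<in>P1. actl ?N (actl M L) = L" by (intro ballI) (simp only: actl_mult[symmetric] NM actl_one)
    show "\<forall>L\<in>P1. actl M (actl ?N L) = L" by (intro ballI) (simp only: actl_mult[symmetric] MN actl_one)
    show "actl M ` P1 \<subseteq> P1" using actl_P1[OF d] by blast
    show "actl ?N ` P1 \<subseteq> P1" using actl_P1[OF dN] by blast
  qed
qed

lemma trace_lemma:
  fixes a b c e l :: "'a::field"
  assumes v: "(v1, v2) \<noteq> (0, 0)" and e1: "a * v1 + b * v2 = l * v1" and e2: "c * v1 + e * v2 = l * v2"
    and det: "l ^ 2 = a * e - b * c" and l: "l \<noteq> 0"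
  shows "b * c = (a - l) * (e - l)" "a + e = 2 * l"
proof -
  have f1: "(a - l) * v1 + b * v2 = 0" using e1 by (simp add: algebra_simps)
  have f2: "c * v1 + (e - l) * v2 = 0" using e2 by (simp add: algebra_simps)
  have g1: "((a - l) * (e - l) - b * c) * v1 = (e - l) * ((a - l) * v1 + b * v2) - b * (c * v1 + (e - l) * v2)"
    by (simp add: algebra_simps)
  have g2: "((a - l) * (e - l) - b * c) * v2 = (a - l) * (c * v1 + (e - l) * v2) - c * ((a - l) * v1 + b * v2)"
    by (simp add: algebra_simps)
  have "((a - l) * (e - l) - b * c) * v1 = 0" "((a - l) * (e - l) - b * c) * v2 = 0"
    using g1 g2 f1 f2 by simp_all
  then show h1: "b * c = (a - l) * (e - l)" using v by auto
  have "a * e - b * c = l * (a + e) - l * l" using h1 by (simp add: algebra_simps)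
  then have "l * l = l * (a + e) - l * l" using det by (simp add: power2_eq_square)
  then have "l * (a + e) = l * (2 * l)" by (simp add: algebra_simps)
  then show "a + e = 2 * l" using l by simp
qed

lemma mv_pow_formula:
  fixes a b c e l :: "'a::field"
  assumes h1: "b * c = (a - l) * (e - l)" and h2: "a + e = 2 * l"
  shows "(mv (a, b, c, e) ^^ k) (x, z) =
     (l ^ k * x + of_nat k * l ^ (k - 1) * ((a - l) * x + b * z),
      l ^ k * z + of_nat k * l ^ (k - 1) * (c * x + (e - l) * z))"
proof (induction k)
  case 0 then show ?case by simp
next
  case (Suc k)
  let ?n1 = "(a - l) * x + b * z"
  let ?n2 = "c * x + (e - l) * z"
  have N1: "(a - l) * ?n1 + b * ?n2 = 0"
  proof -
    have "(a - l) * ?n1 + b * ?n2 = x * ((a - l) * (a - l) + b * c) + b * z * (a + e - 2 * l)"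
      by (simp add: algebra_simps)
    also have "\<dots> = x * ((a - l) * (a + e - 2 * l)) + b * z * (a + e - 2 * l)"
      by (subst h1) (simp add: algebra_simps)
    also have "\<dots> = 0" using h2 by simp
    finally show ?thesis .
  qed
  have N2: "c * ?n1 + (e - l) * ?n2 = 0"
  proof -
    have "c * ?n1 + (e - l) * ?n2 = z * ((e - l) * (e - l) + b * c) + c * x * (a + e - 2 * l)"
      by (simp add: algebra_simps)
    also have "\<dots> = z * ((e - l) * (a + e - 2 * l)) + c * x * (a + e - 2 * l)"
      by (subst h1) (simp add: algebra_simps)
    also have "\<dots> = 0" using h2 by simp
    finally show ?thesis .
  qed
  have K: "of_nat (Suc k) * l ^ k = l ^ k + of_nat k * l ^ (k - 1) * l"
    by (cases k) (simp_all add: algebra_simps)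
  have "(mv (a, b, c, e) ^^ Suc k) (x, z) = mv (a, b, c, e) ((mv (a, b, c, e) ^^ k) (x, z))" by simp
  also have "\<dots> = (l ^ Suc k * x + of_nat (Suc k) * l ^ k * ?n1, l ^ Suc k * z + of_nat (Suc k) * l ^ k * ?n2)"
  proof -
    have A: "a * (l ^ k * x + of_nat k * l ^ (k - 1) * ?n1) + b * (l ^ k * z + of_nat k * l ^ (k - 1) * ?n2)
        = l ^ k * (a * x + b * z) + of_nat k * l ^ (k - 1) * (l * ?n1 + ((a - l) * ?n1 + b * ?n2))"
      by (simp add: algebra_simps)
    have B: "c * (l ^ k * x + of_nat k * l ^ (k - 1) * ?n1) + e * (l ^ k * z + of_nat k * l ^ (k - 1) * ?n2)
        = l ^ k * (c * x + e * z) + of_nat k * l ^ (k - 1) * (l * ?n2 + (c * ?n1 + (e - l) * ?n2))"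
      by (simp add: algebra_simps)
    have A': "l ^ k * (a * x + b * z) + of_nat k * l ^ (k - 1) * (l * ?n1)
        = l ^ Suc k * x + of_nat (Suc k) * l ^ k * ?n1"
      unfolding K by (simp add: algebra_simps)
    have B': "l ^ k * (c * x + e * z) + of_nat k * l ^ (k - 1) * (l * ?n2)
        = l ^ Suc k * z + of_nat (Suc k) * l ^ k * ?n2"
      unfolding K by (simp add: algebra_simps)
    have X: "a * (l ^ k * x + of_nat k * l ^ (k - 1) * ?n1) + b * (l ^ k * z + of_nat k * l ^ (k - 1) * ?n2)
        = l ^ Suc k * x + of_nat (Suc k) * l ^ k * ?n1" by (simp only: A N1 add_0_right A')
    have Z: "c * (l ^ k * x + of_nat k * l ^ (k - 1) * ?n1) + e * (l ^ k * z + of_nat k * l ^ (k - 1) * ?n2)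
        = l ^ Suc k * z + of_nat (Suc k) * l ^ k * ?n2" by (simp only: B N2 add_0_right B')
    show ?thesis unfolding Suc by (simp only: mv_def prod.case fst_conv snd_conv X Z)
  qed
  finally show ?case by simp
qed

lemma scalar_matrix:
  fixes M :: "'a::field_char_0 \<times> 'a \<times> 'a \<times> 'a"
  assumes v: "v \<noteq> (0, 0)" and ev: "mv M v = sv l v" and det: "l ^ 2 = mat_det M" and l: "l \<noteq> 0"
    and k: "k \<ge> 1" and pw: "\<And>w. \<exists>s. (mv M ^^ k) w = sv s w"
  shows "M = smat l (1, 0, 0, 1)"
proof -
  obtain a b c e where M: "M = (a, b, c, e)" by (cases M) auto
  obtain v1 v2 where vv: "v = (v1, v2)" by (cases v) auto
  have e1: "a * v1 + b * v2 = l * v1" and e2: "c * v1 + e * v2 = l * v2"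
    using ev by (simp_all add: M vv mv_def sv_def)
  have d: "l ^ 2 = a * e - b * c" using det by (simp add: M mat_det_def)
  note tr = trace_lemma[OF v[unfolded vv] e1 e2 d l]
  have p: "of_nat k * l ^ (k - 1) \<noteq> (0::'a)" using k l by simp
  obtain s1 where s1: "(mv M ^^ k) (1, 0) = sv s1 (1, 0)" using pw by blast
  obtain s2 where s2: "(mv M ^^ k) (0, 1) = sv s2 (0, 1)" using pw by blast
  have "of_nat k * l ^ (k - 1) * c = 0"
    using s1 mv_pow_formula[OF tr, of k 1 0] by (simp add: M sv_def)
  then have c: "c = 0" by (metis p mult_eq_0_iff)
  have "of_nat k * l ^ (k - 1) * b = 0"
    using s2 mv_pow_formula[OF tr, of k 0 1] by (simp add: M sv_def)
  then have b: "b = 0" by (metis p mult_eq_0_iff)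
  have "(a - l) * (e - l) = 0" using tr(1) b by simp
  then have "a = l \<or> e = l" by simp
  then have a: "a = l" using tr(2) by auto
  then have "e = l" using tr(2) by simp
  then show ?thesis using a b c by (simp add: M smat_def)
qed

lemma mu_card:
  fixes k :: nat
  assumes "k \<ge> 1"
  shows "finite {x::'a::field. x ^ k = 1} \<and> card {x::'a::field. x ^ k = 1} \<le> k"
proof -
  let ?p = "monom (1::'a) k - 1"
  have c: "coeff ?p k = 1" using assms by simp
  then have nz: "?p \<noteq> 0" by (metis coeff_0 zero_neq_one)
  have dg: "degree ?p \<le> k" by (simp add: degree_diff_le degree_monom_le)
  have eq: "{x::'a. x ^ k = 1} = {x. poly ?p x = 0}" by (simp add: poly_monom)
  show ?thesis unfolding eq using poly_roots_finite[OF nz] card_poly_roots_bound[OF nz] dg by simp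
qed

context a5setup
begin

lemma G_group: "group G" by (rule alt_group_is_group)

definition A where "A s = (\<lambda>L \<in> P1. actl (R s) L)"

lemma A_Bij: "s \<in> carrier G \<Longrightarrow> A s \<in> Bij P1"
  unfolding Bij_def A_def using actl_bij[OF R_det]
  by (simp add: bij_betw_def inj_on_def image_def)

lemma A_in_P1: "s \<in> carrier G \<Longrightarrow> L \<in> P1 \<Longrightarrow> A s L = actl (R s) L"
  by (simp add: A_def)

lemma A_hom: "A \<in> hom G (BijGroup P1)"
proof -
  have "A (s \<otimes>\<^bsub>G\<^esub> t) = A s \<otimes>\<^bsub>BijGroup P1\<^esub> A t" if st: "s \<in> carrier G" "t \<in> carrier G" for s t
  proof -
    obtain c where c: "c \<noteq> 0" "R (s \<otimes>\<^bsub>G\<^esub> t) = smat c (mat_mult (R s) (R t))"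
      using R_mult[OF st] by blast
    have "A (s \<otimes>\<^bsub>G\<^esub> t) = compose P1 (A s) (A t)"
    proof (rule ext)
      fix L
      show "A (s \<otimes>\<^bsub>G\<^esub> t) L = compose P1 (A s) (A t) L"
      proof (cases "L \<in> P1")
        case True
        have "actl (R t) L \<in> P1" using actl_P1[OF R_det[OF st(2)] True] .
        then show ?thesis using True c st
          by (simp add: A_def compose_def actl_smat actl_mult)
      next
        case False then show ?thesis by (simp add: A_def compose_def)
      qed
    qed
    then show ?thesis using A_Bij st by (simp add: BijGroup_def)
  qed
  then show ?thesis using A_Bij by (auto simp: hom_def BijGroup_def)
qed

lemma A_action: "group_action G P1 A"
  unfolding group_action_def group_hom_def group_hom_axioms_def
  using G_group group_BijGroup A_hom by blast

definition lam where "lam v s = (SOME t. t \<noteq> 0 \<and> mv (R s) v = sv t v)"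
definition chi where "chi v s = lam v s ^ 2 / mat_det (R s)"

lemma stab_eig:
  assumes v: "v \<noteq> (0, 0)" and s: "s \<in> stabilizer G A (pt v)"
  shows "lam v s \<noteq> 0 \<and> mv (R s) v = sv (lam v s) v"
proof -
  have sc: "s \<in> carrier G" and fx: "A s (pt v) = pt v" using s by (auto simp: stabilizer_def)
  have P: "pt v \<in> P1" unfolding P1_def using v by blast
  have "pt (mv (R s) v) = pt v" using fx A_in_P1[OF sc P] by (simp add: actl_pt)
  then have "mv (R s) v \<in> pt v" using mem_pt by metis
  then have "\<exists>t. t \<noteq> 0 \<and> mv (R s) v = sv t v" by (simp add: in_pt_iff)
  then show ?thesis unfolding lam_def by (rule someI_ex)
qed

lemma lam_unique:
  assumes v: "v \<noteq> (0, 0)" and s: "s \<in> stabilizer G A (pt v)" and e: "mv (R s) v = sv t v"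
  shows "lam v s = t"
  using stab_eig[OF v s] e sv_inj[OF v] by metis

lemma stab_sub: "v \<noteq> (0, 0) \<Longrightarrow> subgroup (stabilizer G A (pt v)) G"
  using group_action.stabilizer_subgroup[OF A_action, of "pt v"] unfolding P1_def by blast

lemma chi_mult:
  assumes v: "v \<noteq> (0, 0)" and s: "s \<in> stabilizer G A (pt v)" and t: "t \<in> stabilizer G A (pt v)"
  shows "chi v (s \<otimes>\<^bsub>G\<^esub> t) = chi v s * chi v t"
proof -
  have sc: "s \<in> carrier G" "t \<in> carrier G" using s t by (auto simp: stabilizer_def)
  have st: "s \<otimes>\<^bsub>G\<^esub> t \<in> stabilizer G A (pt v)" using subgroup.m_closed[OF stab_sub[OF v] s t] .
  obtain c where c: "c \<noteq> 0" "R (s \<otimes>\<^bsub>G\<^esub> t) = smat c (mat_mult (R s) (R t))"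
    using R_mult[OF sc] by blast
  have es: "lam v s \<noteq> 0" "mv (R s) v = sv (lam v s) v" using stab_eig[OF v s] by auto
  have et: "lam v t \<noteq> 0" "mv (R t) v = sv (lam v t) v" using stab_eig[OF v t] by auto
  have "mv (R (s \<otimes>\<^bsub>G\<^esub> t)) v = sv (c * lam v t * lam v s) v"
    using c es et by (simp add: mv_smat mv_mult mv_sv sv_sv mult.assoc)
  then have l: "lam v (s \<otimes>\<^bsub>G\<^esub> t) = c * lam v t * lam v s" using lam_unique[OF v st] by blast
  have d: "mat_det (R (s \<otimes>\<^bsub>G\<^esub> t)) = c ^ 2 * (mat_det (R s) * mat_det (R t))"
    using c by (simp add: det_smat det_mult)
  have nz: "mat_det (R s) \<noteq> 0" "mat_det (R t) \<noteq> 0" using R_det sc by auto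
  show ?thesis unfolding chi_def l d using c nz by (simp add: field_simps power2_eq_square)
qed

lemma chi_nz:
  assumes v: "v \<noteq> (0, 0)" and s: "s \<in> stabilizer G A (pt v)"
  shows "chi v s \<noteq> 0"
proof -
  have sc: "s \<in> carrier G" using s by (auto simp: stabilizer_def)
  show ?thesis using stab_eig[OF v s] R_det[OF sc] by (simp add: chi_def)
qed

lemma chi_one:
  assumes v: "v \<noteq> (0, 0)"
  shows "chi v \<one>\<^bsub>G\<^esub> = 1"
proof -
  have one: "\<one>\<^bsub>G\<^esub> \<in> stabilizer G A (pt v)" using subgroup.one_closed[OF stab_sub[OF v]] .
  obtain c where c: "c \<noteq> 0" "R \<one>\<^bsub>G\<^esub> = smat c (1, 0, 0, 1)" using R_one by blast
  have "mv (R \<one>\<^bsub>G\<^esub>) v = sv c v" using c by (simp add: mv_smat mv_one)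
  then have "lam v \<one>\<^bsub>G\<^esub> = c" using lam_unique[OF v one] by blast
  then show ?thesis using c by (simp add: chi_def smat_def mat_det_def power2_eq_square)
qed

lemma stab_pow:
  assumes v: "v \<noteq> (0, 0)" and s: "s \<in> stabilizer G A (pt v)"
  shows "s [^]\<^bsub>G\<^esub> (k::nat) \<in> stabilizer G A (pt v)"
  by (induction k) (simp_all add: subgroup.one_closed[OF stab_sub[OF v]] subgroup.m_closed[OF stab_sub[OF v] _ s])

lemma chi_pow:
  assumes v: "v \<noteq> (0, 0)" and s: "s \<in> stabilizer G A (pt v)"
  shows "chi v (s [^]\<^bsub>G\<^esub> (k::nat)) = chi v s ^ k"
proof (induction k)
  case 0 then show ?case using chi_one[OF v] by simp
next
  case (Suc k)
  have sk: "s [^]\<^bsub>G\<^esub> k \<in> stabilizer G A (pt v)"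
    using stab_pow[OF v s] by blast
  show ?case using chi_mult[OF v sk s] Suc by simp
qed

lemma R_pow:
  assumes s: "s \<in> carrier G"
  shows "\<exists>c. c \<noteq> 0 \<and> (\<forall>w. mv (R (s [^]\<^bsub>G\<^esub> (k::nat))) w = sv c ((mv (R s) ^^ k) w))"
proof (induction k)
  case 0
  obtain c where c: "c \<noteq> 0" "R \<one>\<^bsub>G\<^esub> = smat c (1, 0, 0, 1)" using R_one by blast
  then show ?case by (auto simp: mv_smat mv_one)
next
  case (Suc k)
  obtain c where c: "c \<noteq> 0" "\<And>w. mv (R (s [^]\<^bsub>G\<^esub> k)) w = sv c ((mv (R s) ^^ k) w)"
    using Suc by blast
  have sk: "s [^]\<^bsub>G\<^esub> k \<in> carrier G" using monoid.nat_pow_closed[OF group.is_monoid[OF G_group] s] .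
  obtain c' where c': "c' \<noteq> 0" "R (s [^]\<^bsub>G\<^esub> k \<otimes>\<^bsub>G\<^esub> s) = smat c' (mat_mult (R (s [^]\<^bsub>G\<^esub> k)) (R s))"
    using R_mult[OF sk s] by blast
  have "mv (R (s [^]\<^bsub>G\<^esub> Suc k)) w = sv (c' * c) ((mv (R s) ^^ Suc k) w)" for w
    using c' c by (simp add: mv_smat mv_mult sv_sv funpow_swap1)
  then show ?case using c c' by (metis mult_eq_0_iff)
qed

lemma chi_kernel:
  assumes v: "v \<noteq> (0, 0)" and s: "s \<in> stabilizer G A (pt v)" and c1: "chi v s = 1"
  shows "s = \<one>\<^bsub>G\<^esub>"
proof -
  have sc: "s \<in> carrier G" using s by (auto simp: stabilizer_def)
  have e: "lam v s \<noteq> 0" "mv (R s) v = sv (lam v s) v" using stab_eig[OF v s] by auto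
  have dnz: "mat_det (R s) \<noteq> 0" using R_det[OF sc] .
  have det: "lam v s ^ 2 = mat_det (R s)" using c1 dnz by (simp add: chi_def)
  obtain k :: nat where k: "k \<ge> 1" "s [^]\<^bsub>G\<^esub> k = \<one>\<^bsub>G\<^esub>"
    using alt_elem_orders[OF sc] by (metis alt_group_one one_le_numeral)
  obtain c where c: "c \<noteq> 0" "\<And>w. mv (R (s [^]\<^bsub>G\<^esub> k)) w = sv c ((mv (R s) ^^ k) w)"
    using R_pow[OF sc] by blast
  obtain c0 where c0: "c0 \<noteq> 0" "R \<one>\<^bsub>G\<^esub> = smat c0 (1, 0, 0, 1)" using R_one by blast
  have pw: "\<exists>t. (mv (R s) ^^ k) w = sv t w" for w
  proof -
    have "sv c ((mv (R s) ^^ k) w) = sv c0 w" using c(2)[of w] k(2) c0 by (simp add: mv_smat mv_one)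
    then have "sv (1 / c) (sv c ((mv (R s) ^^ k) w)) = sv (1 / c) (sv c0 w)" by simp
    then have "(mv (R s) ^^ k) w = sv (c0 / c) w" using c(1) by (simp add: sv_sv)
    then show ?thesis by blast
  qed
  have "R s = smat (lam v s) (1, 0, 0, 1)" by (rule scalar_matrix[OF v e(2) det e(1) k(1) pw])
  then have "psi s = proj_class (1, 0, 0, 1)" using R_class[OF sc] proj_class_smat e(1) by simp
  also have "\<dots> = psi \<one>\<^bsub>G\<^esub>" using psi_one by simp
  finally show ?thesis using psi_inj sc monoid.one_closed[OF group.is_monoid[OF G_group]] by blast
qed

lemma chi_inj:
  assumes v: "v \<noteq> (0, 0)"
  shows "inj_on (chi v) (stabilizer G A (pt v))"
proof (rule inj_onI)
  fix s t assume s: "s \<in> stabilizer G A (pt v)" and t: "t \<in> stabilizer G A (pt v)" and eq: "chi v s = chi v t"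
  have sc: "s \<in> carrier G" "t \<in> carrier G" using s t by (auto simp: stabilizer_def)
  let ?r = "s \<otimes>\<^bsub>G\<^esub> inv\<^bsub>G\<^esub> t"
  have it: "inv\<^bsub>G\<^esub> t \<in> stabilizer G A (pt v)" using subgroup.m_inv_closed[OF stab_sub[OF v] t] .
  have r: "?r \<in> stabilizer G A (pt v)" using subgroup.m_closed[OF stab_sub[OF v] s it] .
  interpret grp: group G by (rule G_group)
  have rt: "?r \<otimes>\<^bsub>G\<^esub> t = s"
    using sc by (simp add: grp.m_assoc)
  have "chi v ?r * chi v t = chi v t" using chi_mult[OF v r t] rt eq by simp
  then have "chi v ?r = 1" using chi_nz[OF v t] by simp
  then have "?r = \<one>\<^bsub>G\<^esub>" using chi_kernel[OF v r] by blast
  then show "s = t" using rt sc by simp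
qed

lemma chi_roots:
  assumes v: "v \<noteq> (0, 0)" and s: "s \<in> stabilizer G A (pt v)"
  shows "chi v s ^ 2 = 1 \<or> chi v s ^ 3 = 1 \<or> chi v s ^ 5 = 1"
proof -
  have sc: "s \<in> carrier G" using s by (auto simp: stabilizer_def)
  show ?thesis using alt_elem_orders[OF sc] chi_pow[OF v s] chi_one[OF v]
    by (metis alt_group_one)
qed

lemma stab_card:
  assumes v: "v \<noteq> (0, 0)"
  shows "card (stabilizer G A (pt v)) \<le> 9"
proof -
  let ?S = "stabilizer G A (pt v)"
  let ?U2 = "{x::'a. x ^ 2 = 1}" and ?U3 = "{x::'a. x ^ 3 = 1}" and ?U5 = "{x::'a. x ^ 5 = 1}"
  have f2: "finite ?U2" "card ?U2 \<le> 2" using mu_card[of 2] by auto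
  have f3: "finite ?U3" "card ?U3 \<le> 3" using mu_card[of 3] by auto
  have f5: "finite ?U5" "card ?U5 \<le> 5" using mu_card[of 5] by auto
  have one: "1 \<in> ?U2 \<inter> ?U3" by simp
  have "card (?U2 \<inter> ?U3) \<ge> 1" using one f2(1)
    by (metis Int_lower1 One_nat_def card_0_eq empty_iff finite_subset less_one not_le)
  then have c23: "card (?U2 \<union> ?U3) \<le> 4" using card_Un_Int[OF f2(1) f3(1)] f2(2) f3(2) by linarith
  have fin: "finite (?U2 \<union> ?U3 \<union> ?U5)" using f2 f3 f5 by simp
  have "card (?U2 \<union> ?U3 \<union> ?U5) \<le> card (?U2 \<union> ?U3) + card ?U5" by (rule card_Un_le)
  then have cU: "card (?U2 \<union> ?U3 \<union> ?U5) \<le> 9" using c23 f5(2) by linarith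
  have sub: "chi v ` ?S \<subseteq> ?U2 \<union> ?U3 \<union> ?U5" using chi_roots[OF v] by blast
  have "card ?S = card (chi v ` ?S)" using card_image[OF chi_inj[OF v]] by simp
  also have "\<dots> \<le> card (?U2 \<union> ?U3 \<union> ?U5)" using card_mono[OF fin sub] .
  finally show ?thesis using cU by linarith
qed

end

lemma arith60: "(a::nat) * b = 60 \<Longrightarrow> a \<le> 9 \<Longrightarrow> b \<le> 9 \<Longrightarrow> False"
proof -
  assume h: "a * b = 60" "a \<le> 9" "b \<le> 9"
  then have "a = 0 \<or> a = 1 \<or> a = 2 \<or> a = 3 \<or> a = 4 \<or> a = 5 \<or> a = 6 \<or> a = 7 \<or> a = 8 \<or> a = 9" by arith
  then show False using h by (elim disjE; simp; presburger)
qed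

context a5setup
begin

lemma no_semi_inv:
  assumes hJ: "homf n J" and nz: "J \<noteq> 0" and n: "1 \<le> n" "n \<le> 8"
    and inv: "\<And>M. M \<in> form_stab d f \<Longrightarrow> \<exists>\<mu>. S M J = smult [:\<mu>:] J"
  shows False
proof -
  obtain L0 where L0: "L0 \<in> Zs J" using Zs_nonempty[OF hJ nz n(1)] by blast
  then obtain v where v: "L0 = pt v" "v \<noteq> (0, 0)" by (auto simp: Zs_def)
  have P: "L0 \<in> P1" using L0 Zs_P1 by blast
  have fz: "finite (Zs J)" "card (Zs J) \<le> n + 1" using Zs_finite_card[OF hJ nz] by auto
  have orb: "orbit G A L0 \<subseteq> Zs J"
  proof
    fix L assume "L \<in> orbit G A L0"
    then obtain g where g: "g \<in> carrier G" "L = A g L0" by (auto simp: orbit_def)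
    obtain \<mu> where mu: "S (R g) J = smult [:\<mu>:] J" using inv[OF R_stab[OF g(1)]] by blast
    show "L \<in> Zs J" using g A_in_P1[OF g(1) P] Zs_inv[OF R_det[OF g(1)] mu L0] by simp
  qed
  have co: "card (orbit G A L0) \<le> 9" using card_mono[OF fz(1) orb] fz(2) n(2) by linarith
  have cs: "card (stabilizer G A L0) \<le> 9" using stab_card[OF v(2)] v(1) by simp
  have "card (orbit G A L0) * card (stabilizer G A L0) = 60"
    using group_action.orbit_stabilizer_theorem[OF A_action P] order_alt5 by simp
  then show False using arith60 co cs by blast
qed

end

lemma T_hom_J:
  assumes "2 * k \<le> d"
  shows "homf (4 * k) (transvectant d d (d - 2 * k) (homog d f) (homog d f))"
proof -
  have "homf (d + d - 2 * (d - 2 * k)) (transvectant d d (d - 2 * k) (homog d f) (homog d f))"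
    by (rule hom_T[OF hom_homog hom_homog]) simp_all
  moreover have "d + d - 2 * (d - 2 * k) = 4 * k" using assms by simp
  ultimately show ?thesis by simp
qed

theorem lemma4p5:
  fixes f :: "'a::{alg_closed_field, field_char_0} poly" and g :: nat
  assumes "hyperelliptic g f"
    and "red_aut_group (2 * g + 2) f \<cong> alt_group 5"
  shows "I4 (2 * g + 2) f = 0 \<and> I4' (2 * g + 2) f = 0 \<and> I6 (2 * g + 2) f = 0 \<and>
         I6' (2 * g + 2) f = 0 \<and> I12 (2 * g + 2) f = 0"
proof -
  let ?d = "2 * g + 2"
  have g2: "g \<ge> 2" using assms(1) by (simp add: hyperelliptic_def)
  obtain phi where phi: "phi \<in> iso (red_aut_group ?d f) (alt_group 5)"
    using assms(2) by (auto simp: is_iso_def)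
  interpret a5setup f ?d phi by unfold_locales (rule phi)
  have J4: "J4 ?d f = 0"
  proof (rule ccontr)
    assume nz: "J4 ?d f \<noteq> 0"
    have h: "homf 4 (J4 ?d f)" using T_hom_J[of 1 ?d f] g2 by (simp add: J4_def)
    show False
    proof (rule no_semi_inv[OF h nz])
      fix M assume M: "M \<in> form_stab ?d f"
      have le: "?d - 2 \<le> ?d" by simp
      show "\<exists>\<mu>. S M (J4 ?d f) = smult [:\<mu>:] (J4 ?d f)"
        unfolding J4_def using J_semi_inv[OF M le] by blast
    qed simp_all
  qed
  have J8: "J8 ?d f = 0"
  proof (rule ccontr)
    assume nz: "J8 ?d f \<noteq> 0"
    have h: "homf 8 (J8 ?d f)" using T_hom_J[of 2 ?d f] g2 by (simp add: J8_def)
    show False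
    proof (rule no_semi_inv[OF h nz])
      fix M assume M: "M \<in> form_stab ?d f"
      have le: "?d - 4 \<le> ?d" by simp
      show "\<exists>\<mu>. S M (J8 ?d f) = smult [:\<mu>:] (J8 ?d f)"
        unfolding J8_def using J_semi_inv[OF M le] by blast
    qed simp_all
  qed
  have FJ4: "FJ4 ?d f = 0" by (simp only: FJ4_def J4 T_zero2)
  have FJ8: "FJ8 ?d f = 0" by (simp only: FJ8_def J8 T_zero2)
  have Mf: "Mform ?d f = 0" by (simp only: Mform_def FJ4 FJ8 T_zero2)
  show ?thesis
    by (simp only: I4_def I4'_def I6_def I6'_def I12_def J4 J8 FJ4 FJ8 Mf T_zero1 simp_thms)
qed

end
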